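(* Let $k \ge 1$ and let $\mathcal{A}_k = (Q, \Sigma, \delta, Q_0, F)$ be a $k$-ambiguous nondeterministic Büchi automaton. Then $\mathrm{kdis}(\mathcal{A}_k)$ is an IBA, and for every $w \in \Sigma^\omega$ we have $L_{\mathrm{kdis}(\mathcal{A}_k)}(w) = 1$ if and only if $\mathcal{A}_k$ has a final path over $w$; i.e. $\mathrm{kdis}(\mathcal{A}_k)$ accepts the same language as $\mathcal{A}_k$.
   Context: An NBA $(Q,\Sigma,\delta,Q_0,F)$ has finite state set $Q$, alphabet $\Sigma$, transition relation $\delta : Q\times\Sigma \to 2^Q$, initial states $Q_0$, final states $F$. For $w = w_0w_1\ldots \in \Sigma^\omega$ a path is $q_0q_1\ldots$ with $q_0 \in Q_0$, $q_{i+1} \in \delta(q_i,w_i)$; it is final if some state of $F$ occurs infinitely often. The NBA accepts the words with at least one final path; it is $k$-ambiguous if every word has at most $k$ final paths. Weighted Büchi automata: $\mathcal{A} = (Q,\Sigma,M,\alpha,F)$ with $M:\Sigma\to\mathbb{Q}^{Q\times Q}$, $\alpha\in\mathbb{Q}^Q$, $F \subseteq Q$, $M(a_1\cdots a_m)=M(a_1)\cdots M(a_m)$. It is ultimately stable if for all $q,q'\in Q$, $a\in\Sigma$ such that $M(u)_{q',q}\ne 0$ for some $u\in\Sigma^*$, we have $M(a)_{q,q'}\in\{0,1\}$. A path over $w=w_0w_1\ldots$ is $q_0q_1\ldots$ with $\alpha(q_0)\ne0$ and $M(w_i)_{q_i,q_{i+1}}\ne0$ for all $i$; it is final if it visits $F$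 infinitely often. Its weight is $\alpha(q_0)\lim_{i\to\infty}\prod_{n\le i}M(w_n)_{q_n,q_{n+1}}$ (the limit exists by ultimate stability). For words with finitely many final paths, $L_\mathcal{A}(w)$ is the sum of the weights of the final paths. $\mathcal{A}$ is an IBA if it is ultimately stable, there is $N\in\mathbb{N}$ with at most $N$ final paths over every $w\in\Sigma^\omega$, and $L_\mathcal{A}(w)\in\{0,1\}$ for all $w\in\Sigma^\omega$; it accepts $\{w\mid L_\mathcal{A}(w)=1\}$. Construction $\mathrm{kdis}$. Let $\mathcal{B}=\{\bot,\top\}$ (false/true), $[k]=\{0,1,\ldots,k\}$, and for $\vec r\in[k]^{Q\times\mathcal{B}}$ let $\mathrm{size}(\vec r)=\sum_{(q,b)}\vec r_{q,b}$. Let $b''(\vec r)=\bot$ if $\vec r_{q,\bot}=0$ for all $q\in Q$, and $b''(\vec r)=\top$ otherwise. For $\vec r,\vec r'\in[k]^{Q\times\mathcal{B}}$ and $a\in\Sigma$, let $w(\vec r,a,\vec r')$ be the number of functions $f: Q\times\mathcal{B}\times\{1,\ldots,k\}\to 2^Q$ such that $f(q,b,i)=\emptyset$ if $i>\vec r_{q,b}$, $f(q,b,i)$ is a nonempty subset of $\delta(q,a)$ if $i\le\vec r_{q,b}$, and for every $(q',b')\in Q\times\mathcal{B}$ the number of triples $(q,b,i)$ with $q'\in f(q,b,i)$ and $b'=((q\in F)\vee b)\wedge b''(\vec r)$ equals $\vec r'_{q',b'}$. Define $\mathrm{kdis}'(\mathcal{A}_k)=(Q'',\Sigma,\Delta'',\alpha',F'')$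 with $Q''=[k]^{Q\times\mathcal{B}}\setminus\{\vec 0\}$; $\Delta''(a)_{\vec r,\vec r'}=(-1)^{\mathrm{size}(\vec r')-\mathrm{size}(\vec r)}w(\vec r,a,\vec r')$; $\alpha'_{\vec r}=(-1)^{\mathrm{size}(\vec r)-1}$ if $\vec r_{q,b}=0$ whenever $q\notin Q_0$ or $b=\top$, and $\vec r_{q,\bot}\le1$ for $q\in Q_0$, and $\alpha'_{\vec r}=0$ otherwise; $F''=\{\vec r\in Q''\mid \vec r_{q,\bot}=0\ \forall q\in Q\}$. $\mathrm{kdis}(\mathcal{A}_k)$ is $\mathrm{kdis}'(\mathcal{A}_k)$ restricted to those states that are reachable (from a state with nonzero $\alpha'$ via transitions of nonzero weight) and from which a cycle through a state of $F''$ can be reached. *)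

theory Defs
  imports Complex_Main
begin

definition nba :: "'q set \<Rightarrow> 'a set \<Rightarrow> ('q \<Rightarrow> 'a \<Rightarrow> 'q set) \<Rightarrow> 'q set \<Rightarrow> 'q set \<Rightarrow> bool" where
  "nba Q Sig \<delta> Q0 F \<longleftrightarrow> finite Q \<and> finite Sig \<and> Q0 \<subseteq> Q \<and> F \<subseteq> Q \<and>
     (\<forall>q\<in>Q. \<forall>a\<in>Sig. \<delta> q a \<subseteq> Q)"

definition word :: "'a set \<Rightarrow> (nat \<Rightarrow> 'a) \<Rightarrow> bool" where
  "word Sig w \<longleftrightarrow> (\<forall>i. w i \<in> Sig)"

definition nba_path :: "('q \<Rightarrow> 'a \<Rightarrow> 'q set) \<Rightarrow> 'q set \<Rightarrow> (nat \<Rightarrow> 'a) \<Rightarrow> (nat \<Rightarrow> 'q) \<Rightarrow> bool" where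
  "nba_path \<delta> Q0 w p \<longleftrightarrow> p 0 \<in> Q0 \<and> (\<forall>i. p (Suc i) \<in> \<delta> (p i) (w i))"

definition nba_final_paths :: "('q \<Rightarrow> 'a \<Rightarrow> 'q set) \<Rightarrow> 'q set \<Rightarrow> 'q set \<Rightarrow> (nat \<Rightarrow> 'a) \<Rightarrow> (nat \<Rightarrow> 'q) set" where
  "nba_final_paths \<delta> Q0 F w = {p. nba_path \<delta> Q0 w p \<and> infinite {i. p i \<in> F}}"

definition k_ambiguous :: "'q set \<Rightarrow> 'a set \<Rightarrow> ('q \<Rightarrow> 'a \<Rightarrow> 'q set) \<Rightarrow> 'q set \<Rightarrow> 'q set \<Rightarrow> nat \<Rightarrow> bool" where
  "k_ambiguous Q Sig \<delta> Q0 F k \<longleftrightarrow>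
     (\<forall>w. word Sig w \<longrightarrow> finite (nba_final_paths \<delta> Q0 F w) \<and> card (nba_final_paths \<delta> Q0 F w) \<le> k)"

section \<open>Weighted Buechi automata (S, Sigma, M, alpha, F); weights in real (values rational)\<close>

primrec Mword :: "'s set \<Rightarrow> ('a \<Rightarrow> 's \<Rightarrow> 's \<Rightarrow> real) \<Rightarrow> 'a list \<Rightarrow> 's \<Rightarrow> 's \<Rightarrow> real" where
  "Mword S M [] q q' = (if q = q' then 1 else 0)"
| "Mword S M (a # u) q q' = (\<Sum>p\<in>S. M a q p * Mword S M u p q')"

definition ultimately_stable :: "'s set \<Rightarrow> 'a set \<Rightarrow> ('a \<Rightarrow> 's \<Rightarrow> 's \<Rightarrow> real) \<Rightarrow> bool" where
  "ultimately_stable S Sig M \<longleftrightarrow>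
     (\<forall>q\<in>S. \<forall>q'\<in>S. \<forall>a\<in>Sig. (\<exists>u\<in>lists Sig. Mword S M u q' q \<noteq> 0) \<longrightarrow> M a q q' \<in> {0, 1})"

definition wba_path :: "'s set \<Rightarrow> ('a \<Rightarrow> 's \<Rightarrow> 's \<Rightarrow> real) \<Rightarrow> ('s \<Rightarrow> real) \<Rightarrow> (nat \<Rightarrow> 'a) \<Rightarrow> (nat \<Rightarrow> 's) \<Rightarrow> bool" where
  "wba_path S M \<alpha> w p \<longleftrightarrow> (\<forall>i. p i \<in> S) \<and> \<alpha> (p 0) \<noteq> 0 \<and> (\<forall>i. M (w i) (p i) (p (Suc i)) \<noteq> 0)"

definition wba_final_paths :: "'s set \<Rightarrow> ('a \<Rightarrow> 's \<Rightarrow> 's \<Rightarrow> real) \<Rightarrow> ('s \<Rightarrow> real) \<Rightarrow> 's set \<Rightarrow> (nat \<Rightarrow> 'a) \<Rightarrow> (nat \<Rightarrow> 's) set" where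
  "wba_final_paths S M \<alpha> F w = {p. wba_path S M \<alpha> w p \<and> infinite {i. p i \<in> F}}"

definition path_weight :: "('a \<Rightarrow> 's \<Rightarrow> 's \<Rightarrow> real) \<Rightarrow> ('s \<Rightarrow> real) \<Rightarrow> (nat \<Rightarrow> 'a) \<Rightarrow> (nat \<Rightarrow> 's) \<Rightarrow> real" where
  "path_weight M \<alpha> w p = \<alpha> (p 0) * lim (\<lambda>i. \<Prod>n\<le>i. M (w n) (p n) (p (Suc n)))"

text \<open>L_A(w): sum of the weights of the final paths (meaningful when there are finitely many).\<close>
definition wba_L :: "'s set \<Rightarrow> ('a \<Rightarrow> 's \<Rightarrow> 's \<Rightarrow> real) \<Rightarrow> ('s \<Rightarrow> real) \<Rightarrow> 's set \<Rightarrow> (nat \<Rightarrow> 'a) \<Rightarrow> real" where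
  "wba_L S M \<alpha> F w = (\<Sum>p\<in>wba_final_paths S M \<alpha> F w. path_weight M \<alpha> w p)"

definition IBA :: "'s set \<Rightarrow> 'a set \<Rightarrow> ('a \<Rightarrow> 's \<Rightarrow> 's \<Rightarrow> real) \<Rightarrow> ('s \<Rightarrow> real) \<Rightarrow> 's set \<Rightarrow> bool" where
  "IBA S Sig M \<alpha> F \<longleftrightarrow> finite S \<and> ultimately_stable S Sig M \<and>
     (\<exists>N::nat. \<forall>w. word Sig w \<longrightarrow> finite (wba_final_paths S M \<alpha> F w) \<and> card (wba_final_paths S M \<alpha> F w) \<le> N) \<and>
     (\<forall>w. word Sig w \<longrightarrow> wba_L S M \<alpha> F w \<in> {0, 1})"

text \<open>States r : Q x B -> [k], represented as functions that vanish outside Q x UNIV.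
  False stands for bottom, True for top.\<close>

definition kstates :: "'q set \<Rightarrow> nat \<Rightarrow> ('q \<times> bool \<Rightarrow> nat) set" where
  "kstates Q k = {r. (\<forall>x. r x \<le> k) \<and> (\<forall>q b. q \<notin> Q \<longrightarrow> r (q, b) = 0) \<and> r \<noteq> (\<lambda>_. 0)}"

definition rsize :: "'q set \<Rightarrow> ('q \<times> bool \<Rightarrow> nat) \<Rightarrow> nat" where
  "rsize Q r = (\<Sum>x\<in>Q \<times> (UNIV::bool set). r x)"

definition bpp :: "'q set \<Rightarrow> ('q \<times> bool \<Rightarrow> nat) \<Rightarrow> bool" where
  "bpp Q r \<longleftrightarrow> (\<exists>q\<in>Q. r (q, False) \<noteq> 0)"

definition kdis_w :: "'q set \<Rightarrow> ('q \<Rightarrow> 'a \<Rightarrow> 'q set) \<Rightarrow> 'q set \<Rightarrow> nat \<Rightarrow>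
    ('q \<times> bool \<Rightarrow> nat) \<Rightarrow> 'a \<Rightarrow> ('q \<times> bool \<Rightarrow> nat) \<Rightarrow> nat" where
  "kdis_w Q \<delta> F k r a r' = card {f :: 'q \<times> bool \<times> nat \<Rightarrow> 'q set.
     (\<forall>x. x \<notin> Q \<times> UNIV \<times> {1..k} \<longrightarrow> f x = {}) \<and>
     (\<forall>q\<in>Q. \<forall>b. \<forall>i\<in>{1..k}.
        (i > r (q, b) \<longrightarrow> f (q, b, i) = {}) \<and>
        (i \<le> r (q, b) \<longrightarrow> f (q, b, i) \<noteq> {} \<and> f (q, b, i) \<subseteq> \<delta> q a)) \<and>
     (\<forall>q'\<in>Q. \<forall>b'.
        card {(q, b, i). (q, b, i) \<in> Q \<times> UNIV \<times> {1..k} \<and> q' \<in> f (q, b, i) \<and>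
                          b' = ((q \<in> F \<or> b) \<and> bpp Q r)} = r' (q', b'))}"

definition kdis_M' :: "'q set \<Rightarrow> ('q \<Rightarrow> 'a \<Rightarrow> 'q set) \<Rightarrow> 'q set \<Rightarrow> nat \<Rightarrow>
    'a \<Rightarrow> ('q \<times> bool \<Rightarrow> nat) \<Rightarrow> ('q \<times> bool \<Rightarrow> nat) \<Rightarrow> real" where
  "kdis_M' Q \<delta> F k a r r' =
     ((-1::real) powi (int (rsize Q r') - int (rsize Q r))) * real (kdis_w Q \<delta> F k r a r')"

definition kdis_alpha' :: "'q set \<Rightarrow> 'q set \<Rightarrow> ('q \<times> bool \<Rightarrow> nat) \<Rightarrow> real" where
  "kdis_alpha' Q Q0 r =
     (if (\<forall>q b. (q \<notin> Q0 \<or> b = True) \<longrightarrow> r (q, b) = 0) \<and> (\<forall>q\<in>Q0. r (q, False) \<le> 1)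
      then (-1::real) ^ (rsize Q r - 1) else 0)"

definition kdis_F' :: "'q set \<Rightarrow> nat \<Rightarrow> ('q \<times> bool \<Rightarrow> nat) set" where
  "kdis_F' Q k = {r \<in> kstates Q k. \<forall>q\<in>Q. r (q, False) = 0}"

definition kdis_edges :: "'q set \<Rightarrow> 'a set \<Rightarrow> ('q \<Rightarrow> 'a \<Rightarrow> 'q set) \<Rightarrow> 'q set \<Rightarrow> nat \<Rightarrow>
    (('q \<times> bool \<Rightarrow> nat) \<times> ('q \<times> bool \<Rightarrow> nat)) set" where
  "kdis_edges Q Sig \<delta> F k = {(r, r'). r \<in> kstates Q k \<and> r' \<in> kstates Q k \<and>
     (\<exists>a\<in>Sig. kdis_M' Q \<delta> F k a r r' \<noteq> 0)}"

definition kdis_S :: "'q set \<Rightarrow> 'a set \<Rightarrow> ('q \<Rightarrow> 'a \<Rightarrow> 'q set) \<Rightarrow> 'q set \<Rightarrow> 'q set \<Rightarrow> nat \<Rightarrow>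
    ('q \<times> bool \<Rightarrow> nat) set" where
  "kdis_S Q Sig \<delta> Q0 F k =
     {r \<in> kstates Q k.
        (\<exists>r0\<in>kstates Q k. kdis_alpha' Q Q0 r0 \<noteq> 0 \<and> (r0, r) \<in> (kdis_edges Q Sig \<delta> F k)\<^sup>*) \<and>
        (\<exists>s\<in>kdis_F' Q k. (r, s) \<in> (kdis_edges Q Sig \<delta> F k)\<^sup>* \<and> (s, s) \<in> (kdis_edges Q Sig \<delta> F k)\<^sup>+)}"

definition kdis_M :: "'q set \<Rightarrow> 'a set \<Rightarrow> ('q \<Rightarrow> 'a \<Rightarrow> 'q set) \<Rightarrow> 'q set \<Rightarrow> 'q set \<Rightarrow> nat \<Rightarrow>
    'a \<Rightarrow> ('q \<times> bool \<Rightarrow> nat) \<Rightarrow> ('q \<times> bool \<Rightarrow> nat) \<Rightarrow> real" where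
  "kdis_M Q Sig \<delta> Q0 F k a r r' =
     (if r \<in> kdis_S Q Sig \<delta> Q0 F k \<and> r' \<in> kdis_S Q Sig \<delta> Q0 F k then kdis_M' Q \<delta> F k a r r' else 0)"

definition kdis_alpha :: "'q set \<Rightarrow> 'a set \<Rightarrow> ('q \<Rightarrow> 'a \<Rightarrow> 'q set) \<Rightarrow> 'q set \<Rightarrow> 'q set \<Rightarrow> nat \<Rightarrow>
    ('q \<times> bool \<Rightarrow> nat) \<Rightarrow> real" where
  "kdis_alpha Q Sig \<delta> Q0 F k r =
     (if r \<in> kdis_S Q Sig \<delta> Q0 F k then kdis_alpha' Q Q0 r else 0)"

definition kdis_F :: "'q set \<Rightarrow> 'a set \<Rightarrow> ('q \<Rightarrow> 'a \<Rightarrow> 'q set) \<Rightarrow> 'q set \<Rightarrow> 'q set \<Rightarrow> nat \<Rightarrow>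
    ('q \<times> bool \<Rightarrow> nat) set" where
  "kdis_F Q Sig \<delta> Q0 F k = kdis_F' Q k \<inter> kdis_S Q Sig \<delta> Q0 F k"

end

theory Submission
  imports Defs "HOL-Library.FuncSet" "HOL-Library.Infinite_Set"
begin

definition pre :: "nat \<Rightarrow> (nat \<Rightarrow> 'q) \<Rightarrow> (nat \<Rightarrow> 'q)" where
  "pre m p = (\<lambda>i. if i \<le> m then p i else undefined)"

lemma pre_pre: "pre j (pre m p) = pre (min j m) p"
  by (auto simp: pre_def fun_eq_iff)

lemma pre_eq_iff: "pre m p = pre m p' \<longleftrightarrow> (\<forall>i\<le>m. p i = p' i)"
  by (auto simp: pre_def fun_eq_iff)

lemma pre_apply[simp]: "i \<le> m \<Longrightarrow> pre m p i = p i"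
  by (auto simp: pre_def)

lemma pre_img_img: "j \<le> m \<Longrightarrow> pre j ` (pre m ` T) = pre j ` T"
  by (simp add: image_image pre_pre min_absorb1)

primrec bit :: "'q set \<Rightarrow> (nat \<Rightarrow> 'q) set \<Rightarrow> (nat \<Rightarrow> 'q) \<Rightarrow> nat \<Rightarrow> bool" where
  "bit F T p 0 = False"
| "bit F T p (Suc m) = ((p m \<in> F \<or> bit F T p m) \<and> (\<exists>p'\<in>T. \<not> bit F T p' m))"

lemma bit_agree:
  "pre m ` T = pre m ` T' \<Longrightarrow> pre m p = pre m p' \<Longrightarrow> bit F T p m = bit F T' p' m"
proof (induction m arbitrary: p p')
  case 0
  then show ?case by simp
next
  case (Suc m)
  have img: "pre m ` T = pre m ` T'"
    using Suc.prems(1) pre_img_img[of m "Suc m" T] pre_img_img[of m "Suc m" T'] by simp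
  have pp: "pre m p = pre m p'" "p m = p' m"
    using Suc.prems(2) by (auto simp: pre_eq_iff)
  have ih: "bit F T p m = bit F T' p' m" using Suc.IH[OF img pp(1)] .
  have ex: "(\<exists>x\<in>T. \<not> bit F T x m) = (\<exists>x\<in>T'. \<not> bit F T' x m)"
  proof
    assume "\<exists>x\<in>T. \<not> bit F T x m"
    then obtain x where x: "x \<in> T" "\<not> bit F T x m" by blast
    then have "pre m x \<in> pre m ` T'" using img by blast
    then obtain y where y: "y \<in> T'" "pre m x = pre m y" by auto
    then show "\<exists>x\<in>T'. \<not> bit F T' x m" using Suc.IH[OF img y(2)] x by blast
  next
    assume "\<exists>x\<in>T'. \<not> bit F T' x m"
    then obtain x where x: "x \<in> T'" "\<not> bit F T' x m" by blast
    then have "pre m x \<in> pre m ` T" using img by blast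
    then obtain y where y: "y \<in> T" "pre m x = pre m y" by auto
    then show "\<exists>x\<in>T. \<not> bit F T x m" using Suc.IH[OF img, of y x] y x by metis
  qed
  show ?case using ih ex pp(2) by simp
qed

lemma bit_pre: "bit F T (pre m p) m = bit F T p m"
  by (rule bit_agree) (auto simp: pre_pre)

definition shape :: "'q set \<Rightarrow> (nat \<Rightarrow> 'q) set \<Rightarrow> nat \<Rightarrow> ('q \<times> bool \<Rightarrow> nat)" where
  "shape F T m = (\<lambda>(q,b). card (pre m ` {p\<in>T. p m = q \<and> bit F T p m = b}))"

lemma shape_alt: "shape F T m (q,b) = card {x \<in> pre m ` T. x m = q \<and> bit F T x m = b}"
proof -
  have "pre m ` {p\<in>T. p m = q \<and> bit F T p m = b} = {x \<in> pre m ` T. x m = q \<and> bit F T x m = b}"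
    by (auto simp: bit_pre)
  then show ?thesis by (simp add: shape_def)
qed

lemma shape_agree: "pre m ` T = pre m ` T' \<Longrightarrow> shape F T m = shape F T' m"
proof -
  assume a: "pre m ` T = pre m ` T'"
  have "\<And>x. x \<in> pre m ` T \<Longrightarrow> bit F T x m = bit F T' x m"
    using bit_agree[OF a] by blast
  then show ?thesis
    unfolding fun_eq_iff by (auto simp: shape_alt a intro!: arg_cong[where f=card])
qed

definition forest :: "('q \<Rightarrow> 'a \<Rightarrow> 'q set) \<Rightarrow> 'q set \<Rightarrow> (nat \<Rightarrow> 'a) \<Rightarrow> nat \<Rightarrow> (nat \<Rightarrow> 'q) set \<Rightarrow> bool" where
  "forest \<delta> Q0 W N T \<longleftrightarrow> finite T \<and>
     (\<forall>p\<in>T. pre N p = p \<and> p 0 \<in> Q0 \<and> (\<forall>i<N. p (Suc i) \<in> \<delta> (p i) (W i)))"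

lemma finite_kstates: "finite Q \<Longrightarrow> finite (kstates Q k)"
proof -
  assume fQ: "finite Q"
  let ?A = "PiE (Q \<times> (UNIV::bool set)) (\<lambda>_. {0..k})"
  have fin: "finite ?A" using fQ by (intro finite_PiE) auto
  have "kstates Q k \<subseteq> (\<lambda>g x. if x \<in> Q \<times> UNIV then g x else 0) ` ?A"
  proof
    fix r assume r: "r \<in> kstates Q k"
    let ?g = "restrict r (Q \<times> UNIV)"
    have "?g \<in> ?A" using r by (auto simp: kstates_def)
    moreover have "r = (\<lambda>x. if x \<in> Q \<times> UNIV then ?g x else 0)"
      using r by (auto simp: kstates_def fun_eq_iff)
    ultimately show "r \<in> (\<lambda>g x. if x \<in> Q \<times> UNIV then g x else 0) ` ?A" by blast
  qed
  then show ?thesis using fin finite_subset by blast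
qed

locale kd =
  fixes Q :: "'q set" and Sig :: "'a set" and \<delta> :: "'q \<Rightarrow> 'a \<Rightarrow> 'q set"
    and Q0 F :: "'q set" and k :: nat
  assumes nba: "nba Q Sig \<delta> Q0 F"
begin

lemma finQ: "finite Q" and Q0Q: "Q0 \<subseteq> Q" and FQ: "F \<subseteq> Q"
  and \<delta>Q: "q \<in> Q \<Longrightarrow> a \<in> Sig \<Longrightarrow> \<delta> q a \<subseteq> Q"
  using nba by (auto simp: nba_def)

abbreviation FO where "FO W N T \<equiv> forest \<delta> Q0 W N T"

lemma forest_Q: "word Sig W \<Longrightarrow> FO W N T \<Longrightarrow> p \<in> T \<Longrightarrow> i \<le> N \<Longrightarrow> p i \<in> Q"
proof (induction i)
  case 0 then show ?case using Q0Q by (auto simp: forest_def)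
next
  case (Suc i)
  then have "p (Suc i) \<in> \<delta> (p i) (W i)" by (auto simp: forest_def)
  moreover have "W i \<in> Sig" using Suc.prems by (auto simp: word_def)
  ultimately show ?case using Suc \<delta>Q by auto
qed

definition onestep :: "(nat \<Rightarrow> 'a) \<Rightarrow> nat \<Rightarrow> (nat \<Rightarrow> 'q) set \<Rightarrow> ('q \<times> bool \<Rightarrow> nat) \<Rightarrow> (nat \<Rightarrow> 'q) set set" where
  "onestep W N T r' = {T'. FO W (Suc N) T' \<and> pre N ` T' = T \<and> shape F T' (Suc N) = r'}"

definition ext :: "nat \<Rightarrow> ((nat \<Rightarrow> 'q) \<Rightarrow> 'q set) \<Rightarrow> (nat \<Rightarrow> 'q) set \<Rightarrow> (nat \<Rightarrow> 'q) set" where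
  "ext N c T = (\<lambda>(p,q). p(Suc N := q)) ` Sigma T c"

lemma pre_undef: assumes "pre N p = p" "N < i" shows "p i = undefined"
proof -
  have "p i = pre N p i" using assms(1) by simp
  also have "\<dots> = undefined" using assms(2) by (simp add: pre_def)
  finally show ?thesis .
qed
lemma pre_upd: assumes "pre N p = p" shows "pre N (p(Suc N := q)) = p"
proof (rule ext)
  fix i show "pre N (p(Suc N := q)) i = p i" using pre_undef[OF assms, of i] by (auto simp: pre_def)
qed
lemma pre_upd2: assumes "pre N p = p" shows "pre (Suc N) (p(Suc N := q)) = p(Suc N := q)"
proof (rule ext)
  fix i show "pre (Suc N) (p(Suc N := q)) i = (p(Suc N := q)) i" using pre_undef[OF assms, of i] by (auto simp: pre_def)
qed
lemma upd_pre: assumes "pre (Suc N) p' = p'" shows "p' = (pre N p')(Suc N := p' (Suc N))"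
proof (rule ext)
  fix i show "p' i = ((pre N p')(Suc N := p' (Suc N))) i" using pre_undef[OF assms, of i] by (auto simp: pre_def)
qed

lemma forest_pre: "FO W N T \<Longrightarrow> p \<in> T \<Longrightarrow> pre N p = p"
  unfolding forest_def by blast

lemma forest_img: "FO W N T \<Longrightarrow> pre N ` T = T"
proof -
  assume a: "FO W N T"
  have "pre N ` T = id ` T" by (rule image_cong) (auto simp: forest_pre[OF a])
  then show ?thesis by simp
qed

lemma forest_fin: "FO W N T \<Longrightarrow> finite T"
  unfolding forest_def by blast

lemma bpp_shape:
  assumes W: "word Sig W" and T: "FO W N T"
  shows "(\<exists>p\<in>T. \<not> bit F T p N) = bpp Q (shape F T N)"
proof
  assume "\<exists>p\<in>T. \<not> bit F T p N"
  then obtain p where p: "p \<in> T" "\<not> bit F T p N" by blast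
  have pq: "p N \<in> Q" using forest_Q[OF W T p(1)] by simp
  have fin: "finite (pre N ` {x\<in>T. x N = p N \<and> bit F T x N = False})" using forest_fin[OF T] by auto
  have "p \<in> pre N ` {x\<in>T. x N = p N \<and> bit F T x N = False}"
    using p forest_pre[OF T p(1)] by (metis (mono_tags, lifting) image_eqI mem_Collect_eq)
  then have "shape F T N (p N, False) \<noteq> 0" using fin by (auto simp: shape_def)
  then show "bpp Q (shape F T N)" using pq by (auto simp: bpp_def)
next
  assume "bpp Q (shape F T N)"
  then obtain q where "q \<in> Q" "shape F T N (q, False) \<noteq> 0" by (auto simp: bpp_def)
  moreover have "shape F T N (q, False) = card (pre N ` {x\<in>T. x N = q \<and> bit F T x N = False})"
    by (simp add: shape_def)
  ultimately have "pre N ` {x\<in>T. x N = q \<and> bit F T x N = False} \<noteq> {}" by (metis card.empty)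
  then show "\<exists>p\<in>T. \<not> bit F T p N" by auto
qed

lemma bit_ext:
  assumes W: "word Sig W" and T: "FO W N T" and img: "pre N ` T' = T" and p': "pre N p' \<in> T"
  shows "bit F T' p' (Suc N) = ((p' N \<in> F \<or> bit F T (pre N p') N) \<and> bpp Q (shape F T N))"
proof -
  have TT: "pre N ` T = T" using forest_img[OF T] .
  have "bit F T' p' N = bit F T (pre N p') N"
    by (rule bit_agree) (auto simp: img TT pre_pre)
  moreover have "(\<exists>x\<in>T'. \<not> bit F T' x N) = (\<exists>x\<in>T. \<not> bit F T x N)"
  proof -
    have "\<And>x. bit F T' x N = bit F T (pre N x) N"
      by (rule bit_agree) (auto simp: img TT pre_pre)
    then show ?thesis using img by auto
  qed
  ultimately show ?thesis using bpp_shape[OF W T] by simp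
qed

end

context kd begin

lemma ext_img:
  assumes T: "FO W N T" and ne: "\<forall>p\<in>T. c p \<noteq> {}"
  shows "pre N ` ext N c T = T"
proof
  show "pre N ` ext N c T \<subseteq> T"
    using pre_upd[OF forest_pre[OF T]] by (auto simp: ext_def)
next
  show "T \<subseteq> pre N ` ext N c T"
  proof
    fix p assume p: "p \<in> T"
    then obtain q where q: "q \<in> c p" using ne by blast
    have "p = pre N (p(Suc N := q))" using pre_upd[OF forest_pre[OF T p]] by simp
    moreover have "p(Suc N := q) \<in> ext N c T" using p q by (force simp: ext_def)
    ultimately show "p \<in> pre N ` ext N c T" by blast
  qed
qed

lemma ext_forest:
  assumes W: "word Sig W" and T: "FO W N T" and sub: "\<forall>p\<in>T. c p \<subseteq> \<delta> (p N) (W N)"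
  shows "FO W (Suc N) (ext N c T)"
proof -
  have fc: "finite (c p)" if "p \<in> T" for p
  proof -
    have "p N \<in> Q" using forest_Q[OF W T that] by simp
    moreover have "W N \<in> Sig" using W by (simp add: word_def)
    ultimately have "c p \<subseteq> Q" using sub that \<delta>Q by blast
    then show ?thesis using finQ finite_subset by blast
  qed
  have fin: "finite (ext N c T)" unfolding ext_def
    using forest_fin[OF T] fc by (intro finite_imageI finite_SigmaI) auto
  have el: "pre (Suc N) x = x \<and> x 0 \<in> Q0 \<and> (\<forall>i<Suc N. x (Suc i) \<in> \<delta> (x i) (W i))"
    if x: "x \<in> ext N c T" for x
  proof -
    obtain p q where pq: "p \<in> T" "q \<in> c p" "x = p(Suc N := q)" using x by (auto simp: ext_def)
    have "pre (Suc N) x = x" using pre_upd2[OF forest_pre[OF T pq(1)]] pq(3) by simp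
    moreover have "x 0 \<in> Q0" using pq T by (auto simp: forest_def)
    moreover have "\<forall>i<Suc N. x (Suc i) \<in> \<delta> (x i) (W i)"
    proof (intro allI impI)
      fix i assume i: "i < Suc N"
      show "x (Suc i) \<in> \<delta> (x i) (W i)"
      proof (cases "i = N")
        case True then show ?thesis using pq sub by auto
      next
        case False
        then have "i < N" using i by simp
        then show ?thesis using pq T by (auto simp: forest_def)
      qed
    qed
    ultimately show ?thesis by blast
  qed
  show ?thesis unfolding forest_def using fin el by blast
qed

lemma ext_shape:
  assumes W: "word Sig W" and T: "FO W N T" and ne: "\<forall>p\<in>T. c p \<noteq> {}"
    and sub: "\<forall>p\<in>T. c p \<subseteq> \<delta> (p N) (W N)"
  shows "shape F (ext N c T) (Suc N) (q', b') =
    card {p\<in>T. q' \<in> c p \<and> b' = ((p N \<in> F \<or> bit F T p N) \<and> bpp Q (shape F T N))}"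
proof -
  let ?T' = "ext N c T"
  let ?A = "{p\<in>T. q' \<in> c p \<and> b' = ((p N \<in> F \<or> bit F T p N) \<and> bpp Q (shape F T N))}"
  have FT': "FO W (Suc N) ?T'" by (rule ext_forest[OF W T sub])
  have img: "pre N ` ?T' = T" by (rule ext_img[OF T ne])
  have "shape F ?T' (Suc N) (q', b') = card {x \<in> ?T'. x (Suc N) = q' \<and> bit F ?T' x (Suc N) = b'}"
    using shape_alt[of F ?T' "Suc N" q' b'] forest_img[OF FT'] by simp
  also have "{x \<in> ?T'. x (Suc N) = q' \<and> bit F ?T' x (Suc N) = b'} = (\<lambda>p. p(Suc N := q')) ` ?A"
  proof
    show "{x \<in> ?T'. x (Suc N) = q' \<and> bit F ?T' x (Suc N) = b'} \<subseteq> (\<lambda>p. p(Suc N := q')) ` ?A"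
    proof
      fix x assume x: "x \<in> {x \<in> ?T'. x (Suc N) = q' \<and> bit F ?T' x (Suc N) = b'}"
      then obtain p q where pq: "p \<in> T" "q \<in> c p" "x = p(Suc N := q)" by (auto simp: ext_def)
      have px: "pre N x = p" using pre_upd[OF forest_pre[OF T pq(1)]] pq(3) by simp
      have b: "bit F ?T' x (Suc N) = ((x N \<in> F \<or> bit F T p N) \<and> bpp Q (shape F T N))"
        using bit_ext[OF W T img, of x] px pq(1) by simp
      have "x N = p N" using pq(3) by simp
      then have "p \<in> ?A" using x b pq by auto
      moreover have "x = p(Suc N := q')" using x pq by auto
      ultimately show "x \<in> (\<lambda>p. p(Suc N := q')) ` ?A" by blast
    qed
  next
    show "(\<lambda>p. p(Suc N := q')) ` ?A \<subseteq> {x \<in> ?T'. x (Suc N) = q' \<and> bit F ?T' x (Suc N) = b'}"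
    proof
      fix x assume "x \<in> (\<lambda>p. p(Suc N := q')) ` ?A"
      then obtain p where p: "p \<in> ?A" "x = p(Suc N := q')" by blast
      have px: "pre N x = p" using pre_upd[OF forest_pre[OF T]] p by simp
      have b: "bit F ?T' x (Suc N) = ((x N \<in> F \<or> bit F T p N) \<and> bpp Q (shape F T N))"
        using bit_ext[OF W T img, of x] px p by simp
      have "x \<in> ?T'" using p by (force simp: ext_def)
      then show "x \<in> {x \<in> ?T'. x (Suc N) = q' \<and> bit F ?T' x (Suc N) = b'}"
        using b p by auto
    qed
  qed
  also have "card ((\<lambda>p. p(Suc N := q')) ` ?A) = card ?A"
  proof (rule card_image)
    show "inj_on (\<lambda>p. p(Suc N := q')) ?A"
    proof (rule inj_onI)
      fix p1 p2 assume "p1 \<in> ?A" "p2 \<in> ?A" "p1(Suc N := q') = p2(Suc N := q')"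
      then show "p1 = p2" using pre_upd[OF forest_pre[OF T], of p1 q'] pre_upd[OF forest_pre[OF T], of p2 q']
        by (metis (no_types, lifting) mem_Collect_eq)
    qed
  qed
  finally show ?thesis .
qed

end

context kd begin

lemma core:
  assumes W: "word Sig W" and T: "FO W N T" and r: "shape F T N \<in> kstates Q k"
    and r': "r' \<in> kstates Q k"
  shows "card (onestep W N T r') = kdis_w Q \<delta> F k (shape F T N) (W N) r'"
proof -
  define r where "r = shape F T N"
  define a where "a = W N"
  have aS: "a \<in> Sig" using W by (simp add: word_def a_def)
  define G where "G p = ((p N \<in> F \<or> bit F T p N) \<and> bpp Q r)" for p :: "nat \<Rightarrow> 'q"
  define C where "C = {c. (\<forall>p. p \<notin> T \<longrightarrow> c p = {}) \<and> (\<forall>p\<in>T. c p \<noteq> {} \<and> c p \<subseteq> \<delta> (p N) a) \<and>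
      (\<forall>q'\<in>Q. \<forall>b'. card {p\<in>T. q' \<in> c p \<and> b' = G p} = r' (q', b'))}"
  define res where "res T' = (\<lambda>p. if p \<in> T then {q. p(Suc N := q) \<in> T'} else {})" for T'
  have TN: "\<And>p. p \<in> T \<Longrightarrow> p N \<in> Q" using forest_Q[OF W T] by blast
  have r'0: "\<And>q b. q \<notin> Q \<Longrightarrow> r' (q, b) = 0" using r' by (auto simp: kstates_def)
  have bijA: "bij_betw (\<lambda>c. ext N c T) C (onestep W N T r')"
  proof (rule bij_betw_byWitness[where f' = res])
    show "\<forall>c\<in>C. res (ext N c T) = c"
    proof
      fix c assume c: "c \<in> C"
      show "res (ext N c T) = c"
      proof (rule ext)
        fix p show "res (ext N c T) p = c p"
        proof (cases "p \<in> T")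
          case False then show ?thesis using c by (simp add: res_def C_def)
        next
          case True
          have "{q. p(Suc N := q) \<in> ext N c T} = c p"
          proof
            show "{q. p(Suc N := q) \<in> ext N c T} \<subseteq> c p"
            proof
              fix q assume "q \<in> {q. p(Suc N := q) \<in> ext N c T}"
              then obtain p2 q2 where pq: "p2 \<in> T" "q2 \<in> c p2" "p(Suc N := q) = p2(Suc N := q2)"
                by (auto simp: ext_def)
              have "p = p2" using pre_upd[OF forest_pre[OF T True], of q] pre_upd[OF forest_pre[OF T pq(1)], of q2] pq(3)
                by simp
              moreover have "q = q2" using pq(3) by (metis fun_upd_same)
              ultimately show "q \<in> c p" using pq by simp
            qed
          next
            show "c p \<subseteq> {q. p(Suc N := q) \<in> ext N c T}" using True by (force simp: ext_def)
          qed
          then show ?thesis using True by (simp add: res_def)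
        qed
      qed
    qed
  next
    show "\<forall>T'\<in>onestep W N T r'. ext N (res T') T = T'"
    proof
      fix T' assume T': "T' \<in> onestep W N T r'"
      then have FT': "FO W (Suc N) T'" and img: "pre N ` T' = T" by (auto simp: onestep_def)
      show "ext N (res T') T = T'"
      proof
        show "ext N (res T') T \<subseteq> T'" by (auto simp: ext_def res_def)
      next
        show "T' \<subseteq> ext N (res T') T"
        proof
          fix x assume x: "x \<in> T'"
          have "x = (pre N x)(Suc N := x (Suc N))" by (rule upd_pre[OF forest_pre[OF FT' x]])
          moreover have "pre N x \<in> T" using img x by blast
          ultimately show "x \<in> ext N (res T') T" using x unfolding ext_def res_def
            by (intro image_eqI[where x = "(pre N x, x (Suc N))"]) auto
        qed
      qed
    qed
  next
    show "(\<lambda>c. ext N c T) ` C \<subseteq> onestep W N T r'"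
    proof
      fix T' assume "T' \<in> (\<lambda>c. ext N c T) ` C"
      then obtain c where c: "c \<in> C" and T': "T' = ext N c T" by blast
      have ne: "\<forall>p\<in>T. c p \<noteq> {}" and sub: "\<forall>p\<in>T. c p \<subseteq> \<delta> (p N) (W N)"
        using c by (auto simp: C_def a_def)
      have "FO W (Suc N) T'" using ext_forest[OF W T sub] T' by simp
      moreover have "pre N ` T' = T" using ext_img[OF T ne] T' by simp
      moreover have "shape F T' (Suc N) = r'"
      proof (rule ext)
        fix x :: "'q \<times> bool"
        obtain q' b' where x: "x = (q', b')" by (cases x)
        have sh: "shape F T' (Suc N) (q', b') = card {p\<in>T. q' \<in> c p \<and> b' = G p}"
          using ext_shape[OF W T ne sub, of q' b'] T' by (simp add: G_def r_def)
        show "shape F T' (Suc N) x = r' x"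
        proof (cases "q' \<in> Q")
          case True then show ?thesis using c sh x by (auto simp: C_def)
        next
          case False
          have e: "{p\<in>T. q' \<in> c p \<and> b' = G p} = {}"
          proof -
            have "\<And>p. p \<in> T \<Longrightarrow> c p \<subseteq> Q" using sub TN \<delta>Q aS a_def by blast
            then show ?thesis using False by auto
          qed
          show ?thesis unfolding x sh e using r'0[OF False] by simp
        qed
      qed
      ultimately show "T' \<in> onestep W N T r'" by (simp add: onestep_def)
    qed
  next
    show "res ` onestep W N T r' \<subseteq> C"
    proof
      fix c assume "c \<in> res ` onestep W N T r'"
      then obtain T' where T': "T' \<in> onestep W N T r'" and c: "c = res T'" by blast
      then have FT': "FO W (Suc N) T'" and img: "pre N ` T' = T" and shT': "shape F T' (Suc N) = r'"
        by (auto simp: onestep_def)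
      have out: "\<forall>p. p \<notin> T \<longrightarrow> c p = {}" using c by (simp add: res_def)
      have ne: "\<forall>p\<in>T. c p \<noteq> {}"
      proof
        fix p assume p: "p \<in> T"
        then obtain x where x: "x \<in> T'" "p = pre N x" using img by blast
        have "x = (pre N x)(Suc N := x (Suc N))" by (rule upd_pre[OF forest_pre[OF FT' x(1)]])
        then have "x (Suc N) \<in> c p" using x p c by (auto simp: res_def)
        then show "c p \<noteq> {}" by blast
      qed
      have sub: "\<forall>p\<in>T. c p \<subseteq> \<delta> (p N) a"
      proof (intro ballI subsetI)
        fix p q assume p: "p \<in> T" and q: "q \<in> c p"
        then have x: "p(Suc N := q) \<in> T'" using c by (simp add: res_def)
        then have "(p(Suc N := q)) (Suc N) \<in> \<delta> ((p(Suc N := q)) N) (W N)"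
          using FT' unfolding forest_def by blast
        then show "q \<in> \<delta> (p N) a" by (simp add: a_def)
      qed
      have eq: "ext N c T = T'"
      proof
        show "ext N c T \<subseteq> T'" using c by (auto simp: ext_def res_def)
      next
        show "T' \<subseteq> ext N c T"
        proof
          fix x assume x: "x \<in> T'"
          have "x = (pre N x)(Suc N := x (Suc N))" by (rule upd_pre[OF forest_pre[OF FT' x]])
          moreover have "pre N x \<in> T" using img x by blast
          ultimately show "x \<in> ext N c T" using x c unfolding ext_def res_def
            by (intro image_eqI[where x = "(pre N x, x (Suc N))"]) auto
        qed
      qed
      have cnt: "\<forall>q'\<in>Q. \<forall>b'. card {p\<in>T. q' \<in> c p \<and> b' = G p} = r' (q', b')"
      proof (intro ballI allI)
        fix q' b'
        have "shape F (ext N c T) (Suc N) (q', b') = card {p\<in>T. q' \<in> c p \<and> b' = G p}"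
          using ext_shape[OF W T ne] sub by (simp add: G_def r_def a_def)
        then show "card {p\<in>T. q' \<in> c p \<and> b' = G p} = r' (q', b')" using eq shT' by simp
      qed
      show "c \<in> C" using out ne sub cnt by (simp add: C_def)
    qed
  qed
  have step1: "card (onestep W N T r') = card C" using bij_betw_same_card[OF bijA] by simp
  have finT: "finite T" using forest_fin[OF T] .
  define cls where "cls qb = {p\<in>T. p N = fst qb \<and> bit F T p N = snd qb}" for qb
  have fcls: "finite (cls qb)" for qb using finT by (simp add: cls_def)
  have cls_card: "card (cls (q,b)) = r (q,b)" for q b
    using shape_alt[of F T N q b] forest_img[OF T] by (simp add: r_def cls_def)
  have "\<forall>qb. \<exists>h. bij_betw h {1..card (cls qb)} (cls qb)"
    using ex_bij_betw_nat_finite_1 fcls by blast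
  then obtain e where e: "\<And>qb. bij_betw (e qb) {1..card (cls qb)} (cls qb)" by metis
  define D where "D = {(q,b,i). q \<in> Q \<and> 1 \<le> i \<and> i \<le> r (q,b)}"
  define \<phi> where "\<phi> x = e (fst x, fst (snd x)) (snd (snd x))" for x :: "'q \<times> bool \<times> nat"
  define \<psi> where "\<psi> p = (p N, bit F T p N,
      inv_into {1..card (cls (p N, bit F T p N))} (e (p N, bit F T p N)) p)" for p
  have \<phi>D: "\<phi> (q,b,i) \<in> T \<and> (\<phi> (q,b,i)) N = q \<and> bit F T (\<phi> (q,b,i)) N = b" if "(q,b,i) \<in> D" for q b i
  proof -
    have "i \<in> {1..card (cls (q,b))}" using that cls_card by (simp add: D_def)
    then have "e (q,b) i \<in> cls (q,b)" using bij_betw_apply[OF e] by blast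
    then show ?thesis by (simp add: \<phi>_def cls_def)
  qed
  have \<psi>T: "\<psi> p \<in> D \<and> \<phi> (\<psi> p) = p" if p: "p \<in> T" for p
  proof -
    let ?qb = "(p N, bit F T p N)"
    have pc: "p \<in> cls ?qb" using p by (simp add: cls_def)
    have "inv_into {1..card (cls ?qb)} (e ?qb) p \<in> {1..card (cls ?qb)}"
      using bij_betw_apply[OF bij_betw_inv_into[OF e] pc] .
    moreover have "e ?qb (inv_into {1..card (cls ?qb)} (e ?qb) p) = p"
      using bij_betw_inv_into_right[OF e pc] .
    ultimately show ?thesis using cls_card TN[OF p] by (simp add: \<psi>_def D_def \<phi>_def)
  qed
  have \<phi>\<psi>: "\<psi> (\<phi> x) = x" if x: "x \<in> D" for x
  proof -
    obtain q b i where qbi: "x = (q,b,i)" by (cases x) auto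
    have d: "(q,b,i) \<in> D" using x qbi by simp
    have "i \<in> {1..card (cls (q,b))}" using d cls_card by (simp add: D_def)
    then have "inv_into {1..card (cls (q,b))} (e (q,b)) (e (q,b) i) = i"
      using bij_betw_inv_into_left[OF e] by blast
    then show ?thesis using \<phi>D[OF d] qbi by (simp add: \<psi>_def \<phi>_def)
  qed
  have inj\<phi>: "inj_on \<phi> D" by (metis \<phi>\<psi> inj_onI)
  have cardDT: "card {x\<in>D. P (\<phi> x)} = card {p\<in>T. P p}" for P
  proof -
    have "\<phi> ` {x\<in>D. P (\<phi> x)} = {p\<in>T. P p}"
    proof
      show "\<phi> ` {x\<in>D. P (\<phi> x)} \<subseteq> {p\<in>T. P p}" using \<phi>D by auto
    next
      show "{p\<in>T. P p} \<subseteq> \<phi> ` {x\<in>D. P (\<phi> x)}"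
      proof
        fix p assume "p \<in> {p\<in>T. P p}"
        then show "p \<in> \<phi> ` {x\<in>D. P (\<phi> x)}" using \<psi>T[of p] by (metis (mono_tags, lifting) image_eqI mem_Collect_eq)
      qed
    qed
    moreover have "inj_on \<phi> {x\<in>D. P (\<phi> x)}" using inj\<phi> by (rule inj_on_subset) auto
    ultimately show ?thesis using card_image by fastforce
  qed
  have rk: "r (q,b) \<le> k" for q b using r by (simp add: kstates_def r_def)
  have Dsub: "D \<subseteq> Q \<times> UNIV \<times> {1..k}" using rk by (force simp: D_def intro: le_trans)
  define Fs where "Fs = {f :: 'q \<times> bool \<times> nat \<Rightarrow> 'q set.
     (\<forall>x. x \<notin> Q \<times> UNIV \<times> {1..k} \<longrightarrow> f x = {}) \<and>
     (\<forall>q\<in>Q. \<forall>b. \<forall>i\<in>{1..k}.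
        (i > r (q, b) \<longrightarrow> f (q, b, i) = {}) \<and>
        (i \<le> r (q, b) \<longrightarrow> f (q, b, i) \<noteq> {} \<and> f (q, b, i) \<subseteq> \<delta> q a)) \<and>
     (\<forall>q'\<in>Q. \<forall>b'.
        card {(q, b, i). (q, b, i) \<in> Q \<times> UNIV \<times> {1..k} \<and> q' \<in> f (q, b, i) \<and>
                          b' = ((q \<in> F \<or> b) \<and> bpp Q r)} = r' (q', b'))}"
  have kw: "kdis_w Q \<delta> F k r a r' = card Fs" by (simp add: kdis_w_def Fs_def)
  have cnt_eq: "{(q, b, i). (q, b, i) \<in> Q \<times> UNIV \<times> {1..k} \<and> q' \<in> f (q, b, i) \<and> b' = ((q \<in> F \<or> b) \<and> bpp Q r)}
      = {x\<in>D. q' \<in> f x \<and> b' = G (\<phi> x)}"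
    if fo: "\<forall>x\<in>Q \<times> UNIV \<times> {1..k}. x \<notin> D \<longrightarrow> f x = {}" for f q' b'
  proof
    show "{(q, b, i). (q, b, i) \<in> Q \<times> UNIV \<times> {1..k} \<and> q' \<in> f (q, b, i) \<and> b' = ((q \<in> F \<or> b) \<and> bpp Q r)}
      \<subseteq> {x\<in>D. q' \<in> f x \<and> b' = G (\<phi> x)}"
    proof
      fix x assume x: "x \<in> {(q, b, i). (q, b, i) \<in> Q \<times> UNIV \<times> {1..k} \<and> q' \<in> f (q, b, i) \<and> b' = ((q \<in> F \<or> b) \<and> bpp Q r)}"
      obtain q b i where qbi: "x = (q,b,i)" by (cases x) auto
      have x1: "(q,b,i) \<in> Q \<times> UNIV \<times> {1..k}" "q' \<in> f (q,b,i)" using x qbi by auto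
      have "x \<in> D" using fo x1 qbi by (metis empty_iff)
      then show "x \<in> {x\<in>D. q' \<in> f x \<and> b' = G (\<phi> x)}" using x qbi \<phi>D[of q b i] by (auto simp: G_def)
    qed
  next
    show "{x\<in>D. q' \<in> f x \<and> b' = G (\<phi> x)} \<subseteq>
      {(q, b, i). (q, b, i) \<in> Q \<times> UNIV \<times> {1..k} \<and> q' \<in> f (q, b, i) \<and> b' = ((q \<in> F \<or> b) \<and> bpp Q r)}"
    proof
      fix x assume x: "x \<in> {x\<in>D. q' \<in> f x \<and> b' = G (\<phi> x)}"
      obtain q b i where qbi: "x = (q,b,i)" by (cases x) auto
      show "x \<in> {(q, b, i). (q, b, i) \<in> Q \<times> UNIV \<times> {1..k} \<and> q' \<in> f (q, b, i) \<and> b' = ((q \<in> F \<or> b) \<and> bpp Q r)}"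
        using x qbi \<phi>D[of q b i] Dsub by (auto simp: G_def)
    qed
  qed
  define \<Phi> where "\<Phi> c = (\<lambda>x. if x \<in> D then c (\<phi> x) else {})" for c :: "(nat \<Rightarrow> 'q) \<Rightarrow> 'q set"
  define \<Psi> where "\<Psi> f = (\<lambda>p. if p \<in> T then f (\<psi> p) else {})" for f :: "'q \<times> bool \<times> nat \<Rightarrow> 'q set"
  have bijB: "bij_betw \<Phi> C Fs"
  proof (rule bij_betw_byWitness[where f' = \<Psi>])
    show "\<forall>c\<in>C. \<Psi> (\<Phi> c) = c"
    proof
      fix c assume c: "c \<in> C"
      show "\<Psi> (\<Phi> c) = c"
      proof
        fix p show "\<Psi> (\<Phi> c) p = c p"
          using c \<psi>T[of p] by (auto simp: \<Psi>_def \<Phi>_def C_def)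
      qed
    qed
  next
    show "\<forall>f\<in>Fs. \<Phi> (\<Psi> f) = f"
    proof
      fix f assume f: "f \<in> Fs"
      show "\<Phi> (\<Psi> f) = f"
      proof
        fix x show "\<Phi> (\<Psi> f) x = f x"
        proof (cases "x \<in> D")
          case True
          obtain q b i where qbi: "x = (q,b,i)" by (cases x) auto
          then show ?thesis using True \<phi>D[of q b i] \<phi>\<psi>[OF True] by (simp add: \<Phi>_def \<Psi>_def)
        next
          case False
          obtain q b i where qbi: "x = (q,b,i)" by (cases x) auto
          have "f x = {}"
          proof (cases "x \<in> Q \<times> UNIV \<times> {1..k}")
            case True
            then have "i > r (q,b)" using False qbi by (auto simp: D_def)
            then show ?thesis using f True qbi by (auto simp: Fs_def)
          next
            case False
            have f1: "\<forall>x. x \<notin> Q \<times> UNIV \<times> {1..k} \<longrightarrow> f x = {}" using f unfolding Fs_def by blast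
            then show ?thesis using False by blast
          qed
          then show ?thesis using False by (simp add: \<Phi>_def)
        qed
      qed
    qed
  next
    show "\<Phi> ` C \<subseteq> Fs"
    proof
      fix f assume "f \<in> \<Phi> ` C"
      then obtain c where c: "c \<in> C" and f: "f = \<Phi> c" by blast
      have fo: "\<forall>x\<in>Q \<times> UNIV \<times> {1..k}. x \<notin> D \<longrightarrow> f x = {}" using f by (simp add: \<Phi>_def)
      have A: "\<forall>x. x \<notin> Q \<times> UNIV \<times> {1..k} \<longrightarrow> f x = {}" using f Dsub by (auto simp: \<Phi>_def)
      have B: "\<forall>q\<in>Q. \<forall>b. \<forall>i\<in>{1..k}.
        (i > r (q, b) \<longrightarrow> f (q, b, i) = {}) \<and>
        (i \<le> r (q, b) \<longrightarrow> f (q, b, i) \<noteq> {} \<and> f (q, b, i) \<subseteq> \<delta> q a)"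
      proof (intro ballI allI conjI impI)
        fix q b i assume q: "q \<in> Q" and i: "i \<in> {1..k}"
        { assume "i > r (q,b)" then show "f (q,b,i) = {}" using f by (simp add: \<Phi>_def D_def) }
        { assume ir: "i \<le> r (q,b)"
          then have d: "(q,b,i) \<in> D" using q i by (simp add: D_def)
          have cc: "\<forall>p\<in>T. c p \<noteq> {} \<and> c p \<subseteq> \<delta> (p N) a" using c by (simp add: C_def)
          have fe: "f (q,b,i) = c (\<phi> (q,b,i))" using f d by (simp add: \<Phi>_def)
          show "f (q,b,i) \<noteq> {}" "f (q,b,i) \<subseteq> \<delta> q a"
            using cc \<phi>D[OF d] fe by metis+ }
      qed
      have Cc: "\<forall>q'\<in>Q. \<forall>b'.
        card {(q, b, i). (q, b, i) \<in> Q \<times> UNIV \<times> {1..k} \<and> q' \<in> f (q, b, i) \<and>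
                          b' = ((q \<in> F \<or> b) \<and> bpp Q r)} = r' (q', b')"
      proof (intro ballI allI)
        fix q' b' assume q': "q' \<in> Q"
        have "{x\<in>D. q' \<in> f x \<and> b' = G (\<phi> x)} = {x\<in>D. q' \<in> c (\<phi> x) \<and> b' = G (\<phi> x)}"
          using f by (auto simp: \<Phi>_def)
        then have "card {x\<in>D. q' \<in> f x \<and> b' = G (\<phi> x)} = card {p\<in>T. q' \<in> c p \<and> b' = G p}"
          using cardDT[of "\<lambda>p. q' \<in> c p \<and> b' = G p"] by simp
        also have "\<dots> = r' (q', b')" using c q' by (simp add: C_def)
        finally show "card {(q, b, i). (q, b, i) \<in> Q \<times> UNIV \<times> {1..k} \<and> q' \<in> f (q, b, i) \<and>
                          b' = ((q \<in> F \<or> b) \<and> bpp Q r)} = r' (q', b')"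
          using cnt_eq[OF fo] by simp
      qed
      show "f \<in> Fs" unfolding Fs_def using A B Cc by blast
    qed
  next
    show "\<Psi> ` Fs \<subseteq> C"
    proof
      fix c assume "c \<in> \<Psi> ` Fs"
      then obtain f where f: "f \<in> Fs" and c: "c = \<Psi> f" by blast
      have fo: "\<forall>x\<in>Q \<times> UNIV \<times> {1..k}. x \<notin> D \<longrightarrow> f x = {}"
        using f by (auto simp: Fs_def D_def)
      have A: "\<forall>p. p \<notin> T \<longrightarrow> c p = {}" using c by (simp add: \<Psi>_def)
      have B: "\<forall>p\<in>T. c p \<noteq> {} \<and> c p \<subseteq> \<delta> (p N) a"
      proof
        fix p assume p: "p \<in> T"
        obtain q b i where qbi: "\<psi> p = (q,b,i)" by (cases "\<psi> p") auto
        have d: "(q,b,i) \<in> D" and pe: "\<phi> (q,b,i) = p" using \<psi>T[OF p] qbi by auto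
        have "q = p N" using \<phi>D[OF d] pe by simp
        moreover have "q \<in> Q" "i \<in> {1..k}" "i \<le> r (q,b)" using d Dsub by (auto simp: D_def)
        ultimately show "c p \<noteq> {} \<and> c p \<subseteq> \<delta> (p N) a" using f p c qbi by (auto simp: Fs_def \<Psi>_def)
      qed
      have Cc: "\<forall>q'\<in>Q. \<forall>b'. card {p\<in>T. q' \<in> c p \<and> b' = G p} = r' (q', b')"
      proof (intro ballI allI)
        fix q' b' assume q': "q' \<in> Q"
        have "{p\<in>T. q' \<in> c p \<and> b' = G p} = {p\<in>T. q' \<in> f (\<psi> p) \<and> b' = G p}"
          using c by (auto simp: \<Psi>_def)
        then have "card {p\<in>T. q' \<in> c p \<and> b' = G p} = card {x\<in>D. q' \<in> f (\<psi> (\<phi> x)) \<and> b' = G (\<phi> x)}"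
          using cardDT[of "\<lambda>p. q' \<in> f (\<psi> p) \<and> b' = G p"] by simp
        also have "{x\<in>D. q' \<in> f (\<psi> (\<phi> x)) \<and> b' = G (\<phi> x)} = {x\<in>D. q' \<in> f x \<and> b' = G (\<phi> x)}"
          using \<phi>\<psi> by auto
        also have "card \<dots> = r' (q', b')" using cnt_eq[OF fo] f q' by (simp add: Fs_def)
        finally show "card {p\<in>T. q' \<in> c p \<and> b' = G p} = r' (q', b')" .
      qed
      show "c \<in> C" unfolding C_def using A B Cc by blast
    qed
  qed
  have "card C = card Fs" using bij_betw_same_card[OF bijB] .
  then show ?thesis using step1 kw by (simp add: r_def a_def)
qed

end

context kd begin

lemma shape_pre_agree: "pre N ` T' = T \<Longrightarrow> i \<le> N \<Longrightarrow> shape F T' i = shape F T i"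
  by (rule shape_agree) (metis pre_img_img)

lemma onestep_fin:
  assumes W: "word Sig W" and T: "FO W N T"
  shows "finite (onestep W N T r')"
proof -
  have "onestep W N T r' \<subseteq> Pow (ext N (\<lambda>_. Q) T)"
  proof
    fix T' assume T': "T' \<in> onestep W N T r'"
    then have FT': "FO W (Suc N) T'" and img: "pre N ` T' = T" by (auto simp: onestep_def)
    have "T' \<subseteq> ext N (\<lambda>_. Q) T"
    proof
      fix x assume x: "x \<in> T'"
      have "x = (pre N x)(Suc N := x (Suc N))" by (rule upd_pre[OF forest_pre[OF FT' x]])
      moreover have "pre N x \<in> T" using img x by blast
      moreover have "x (Suc N) \<in> Q" using forest_Q[OF W FT' x] by simp
      ultimately show "x \<in> ext N (\<lambda>_. Q) T" unfolding ext_def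
        by (intro image_eqI[where x = "(pre N x, x (Suc N))"]) auto
    qed
    then show "T' \<in> Pow (ext N (\<lambda>_. Q) T)" by simp
  qed
  moreover have "finite (ext N (\<lambda>_. Q) T)" unfolding ext_def
    using forest_fin[OF T] finQ by auto
  ultimately show ?thesis by (meson finite_Pow_iff finite_subset)
qed

primrec fs :: "(nat \<Rightarrow> 'a) \<Rightarrow> (nat \<Rightarrow> 'q \<times> bool \<Rightarrow> nat) \<Rightarrow> (nat \<Rightarrow> 'q) set \<Rightarrow> nat \<Rightarrow> nat \<Rightarrow> (nat \<Rightarrow> 'q) set set" where
  "fs W \<rho> T N 0 = {T}"
| "fs W \<rho> T N (Suc j) = (\<Union>T'\<in>fs W \<rho> T N j. onestep W (N + j) T' (\<rho> (Suc (N + j))))"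

lemma fs_props:
  assumes W: "word Sig W" and T: "FO W N T"
  shows "T' \<in> fs W \<rho> T N j \<Longrightarrow> FO W (N + j) T' \<and> pre N ` T' = T \<and>
     (\<forall>i. N < i \<longrightarrow> i \<le> N + j \<longrightarrow> shape F T' i = \<rho> i)"
proof (induction j arbitrary: T')
  case 0
  then show ?case using T forest_img[OF T] by auto
next
  case (Suc j)
  then obtain T1 where T1: "T1 \<in> fs W \<rho> T N j" and T': "T' \<in> onestep W (N + j) T1 (\<rho> (Suc (N + j)))"
    by auto
  have ih: "FO W (N + j) T1" "pre N ` T1 = T" "\<forall>i. N < i \<longrightarrow> i \<le> N + j \<longrightarrow> shape F T1 i = \<rho> i"
    using Suc.IH[OF T1] by auto
  have o: "FO W (Suc (N + j)) T'" "pre (N + j) ` T' = T1" "shape F T' (Suc (N + j)) = \<rho> (Suc (N + j))"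
    using T' by (auto simp: onestep_def)
  have "pre N ` T' = T" using o(2) ih(2) pre_img_img[of N "N + j" T'] by simp
  moreover have "\<forall>i. N < i \<longrightarrow> i \<le> N + Suc j \<longrightarrow> shape F T' i = \<rho> i"
  proof (intro allI impI)
    fix i assume i: "N < i" "i \<le> N + Suc j"
    show "shape F T' i = \<rho> i"
    proof (cases "i = Suc (N + j)")
      case True then show ?thesis using o(3) by simp
    next
      case False
      then have "i \<le> N + j" using i by simp
      then show ?thesis using shape_pre_agree[OF o(2)] ih(3) i by simp
    qed
  qed
  ultimately show ?case using o(1) by simp
qed

lemma fs_card:
  assumes W: "word Sig W" and T: "FO W N T" and sT: "shape F T N = \<rho> N"
    and ks: "\<forall>i. \<rho> i \<in> kstates Q k"
  shows "finite (fs W \<rho> T N j) \<and>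
    card (fs W \<rho> T N j) = (\<Prod>n<j. kdis_w Q \<delta> F k (\<rho> (N + n)) (W (N + n)) (\<rho> (Suc (N + n))))"
proof (induction j)
  case 0 then show ?case by simp
next
  case (Suc j)
  let ?w = "kdis_w Q \<delta> F k (\<rho> (N + j)) (W (N + j)) (\<rho> (Suc (N + j)))"
  have props: "FO W (N + j) T1 \<and> shape F T1 (N + j) = \<rho> (N + j)" if "T1 \<in> fs W \<rho> T N j" for T1
  proof (cases j)
    case 0 then show ?thesis using that T sT by simp
  next
    case (Suc j') then show ?thesis using fs_props[OF W T that] by simp
  qed
  have fin1: "\<forall>T1\<in>fs W \<rho> T N j. finite (onestep W (N + j) T1 (\<rho> (Suc (N + j))))"
    using onestep_fin[OF W] props by blast
  have disj: "\<forall>T1\<in>fs W \<rho> T N j. \<forall>T2\<in>fs W \<rho> T N j. T1 \<noteq> T2 \<longrightarrow>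
     onestep W (N + j) T1 (\<rho> (Suc (N + j))) \<inter> onestep W (N + j) T2 (\<rho> (Suc (N + j))) = {}"
    by (auto simp: onestep_def)
  have c1: "\<forall>T1\<in>fs W \<rho> T N j. card (onestep W (N + j) T1 (\<rho> (Suc (N + j)))) = ?w"
    using core[OF W] props ks by simp
  have "card (fs W \<rho> T N (Suc j)) = (\<Sum>T1\<in>fs W \<rho> T N j. card (onestep W (N + j) T1 (\<rho> (Suc (N + j)))))"
    using card_UN_disjoint[OF conjunct1[OF Suc.IH] fin1 disj] by simp
  also have "\<dots> = card (fs W \<rho> T N j) * ?w" using c1 by simp
  finally have "card (fs W \<rho> T N (Suc j)) = (\<Prod>n<Suc j. kdis_w Q \<delta> F k (\<rho> (N + n)) (W (N + n)) (\<rho> (Suc (N + n))))"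
    using Suc.IH by simp
  moreover have "finite (fs W \<rho> T N (Suc j))" using Suc.IH fin1 by simp
  ultimately show ?case by blast
qed

definition T0 :: "('q \<times> bool \<Rightarrow> nat) \<Rightarrow> (nat \<Rightarrow> 'q) set" where
  "T0 r = (\<lambda>q. pre 0 (\<lambda>_. q)) ` {q. q \<in> Q0 \<and> r (q, False) = 1}"

lemma shape0: "FO W 0 T \<Longrightarrow> shape F T 0 (q, b) = (if b then 0 else card {x\<in>T. x 0 = q})"
  using shape_alt[of F T 0 q b] forest_img[of W 0 T] by auto

lemma alpha_ok:
  assumes "kdis_alpha' Q Q0 r \<noteq> 0"
  shows "\<And>q b. (q \<notin> Q0 \<or> b) \<Longrightarrow> r (q, b) = 0" and "\<And>q. q \<in> Q0 \<Longrightarrow> r (q, False) \<le> 1"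
  using assms by (auto simp: kdis_alpha'_def split: if_splits)

lemma T0_forest: "FO W 0 (T0 r)"
proof -
  have "finite (T0 r)" unfolding T0_def using Q0Q finQ
    by (intro finite_imageI) (auto intro: finite_subset)
  then show ?thesis unfolding forest_def T0_def by (auto simp: pre_pre)
qed

lemma T0_shape:
  assumes a: "kdis_alpha' Q Q0 r \<noteq> 0"
  shows "shape F (T0 r) 0 = r"
proof
  fix x :: "'q \<times> bool"
  obtain q b where x: "x = (q, b)" by (cases x)
  have inj: "inj (\<lambda>q. pre 0 (\<lambda>_::nat. q))" by (rule injI) (metis pre_apply le0)
  have "{y\<in>T0 r. y 0 = q} = (\<lambda>q. pre 0 (\<lambda>_. q)) ` {q'. q' \<in> Q0 \<and> r (q', False) = 1 \<and> q' = q}"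
    by (auto simp: T0_def)
  also have "{q'. q' \<in> Q0 \<and> r (q', False) = 1 \<and> q' = q} = (if q \<in> Q0 \<and> r (q, False) = 1 then {q} else {})"
    by auto
  finally have "card {y\<in>T0 r. y 0 = q} = (if q \<in> Q0 \<and> r (q, False) = 1 then 1 else 0)"
    by simp
  moreover have "r (q, False) = (if q \<in> Q0 \<and> r (q, False) = 1 then 1 else 0)"
    using alpha_ok(1)[OF a, of q False] alpha_ok(2)[OF a, of q] by (cases "q \<in> Q0") auto
  moreover have "b \<Longrightarrow> r (q, b) = 0" using alpha_ok(1)[OF a, of q b] by simp
  ultimately show "shape F (T0 r) 0 x = r x" using shape0[OF T0_forest] x by (cases b) auto
qed

lemma T0_unique:
  assumes a: "kdis_alpha' Q Q0 r \<noteq> 0" and T: "FO W 0 T" and s: "shape F T 0 = r"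
  shows "T = T0 r"
proof -
  have cnt: "card {x\<in>T. x 0 = q} = r (q, False)" for q using shape0[OF T, of q False] s by simp
  have fin: "finite {x\<in>T. x 0 = q}" for q using forest_fin[OF T] by simp
  have xe: "x = pre 0 (\<lambda>_. x 0)" if "x \<in> T" for x
    using forest_pre[OF T that] by (metis (no_types, lifting) pre_eq_iff le_zero_eq)
  show ?thesis
  proof
    show "T \<subseteq> T0 r"
    proof
      fix x assume x: "x \<in> T"
      then have "{y\<in>T. y 0 = x 0} \<noteq> {}" by blast
      then have "r (x 0, False) \<noteq> 0" using cnt[of "x 0"] fin[of "x 0"] card_0_eq by metis
      then have x0: "x 0 \<in> Q0" using alpha_ok(1)[OF a, of "x 0" False] by auto
      have "r (x 0, False) = 1" using alpha_ok(2)[OF a x0] \<open>r (x 0, False) \<noteq> 0\<close> by linarith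
      then show "x \<in> T0 r" using xe[OF x] x0 unfolding T0_def by blast
    qed
  next
    show "T0 r \<subseteq> T"
    proof
      fix x assume "x \<in> T0 r"
      then obtain q where q: "q \<in> Q0" "r (q, False) = 1" "x = pre 0 (\<lambda>_. q)" by (auto simp: T0_def)
      then have "{y\<in>T. y 0 = q} \<noteq> {}" using cnt[of q] by (metis card.empty zero_neq_one)
      then obtain y where y: "y \<in> T" "y 0 = q" by blast
      then show "x \<in> T" using xe[OF y(1)] q by simp
    qed
  qed
qed

end

lemma card_Collect_empty: "(\<forall>x\<in>A. \<not> P x) \<Longrightarrow> card {x\<in>A. P x} = 0"
proof -
  assume "\<forall>x\<in>A. \<not> P x"
  then have "{x\<in>A. P x} = {}" by blast
  then show ?thesis by (simp only: card.empty)
qed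

locale kda = kd + assumes amb: "k_ambiguous Q Sig \<delta> Q0 F k"
begin

abbreviation Fin where "Fin W \<equiv> nba_final_paths \<delta> Q0 F W"

lemma Fin_fin: "word Sig W \<Longrightarrow> finite (Fin W) \<and> card (Fin W) \<le> k"
  using amb by (simp add: k_ambiguous_def)

definition kpath where "kpath W \<rho> \<longleftrightarrow> \<rho> 0 \<in> kstates Q k \<and> kdis_alpha' Q Q0 (\<rho> 0) \<noteq> 0 \<and>
   (\<forall>i. \<rho> (Suc i) \<in> kstates Q k \<and> kdis_w Q \<delta> F k (\<rho> i) (W i) (\<rho> (Suc i)) \<noteq> 0)"

definition kfinal where "kfinal \<rho> \<longleftrightarrow> infinite {i. \<rho> i \<in> kdis_F' Q k}"

definition Paths where "Paths W \<rho> = {S. S \<subseteq> Fin W \<and> S \<noteq> {} \<and> (\<forall>m. shape F S m = \<rho> m)}"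

lemma kpath_ks: "kpath W \<rho> \<Longrightarrow> \<rho> i \<in> kstates Q k"
  by (cases i) (auto simp: kpath_def)

lemma path_Q: "word Sig W \<Longrightarrow> nba_path \<delta> Q0 W p \<Longrightarrow> p i \<in> Q"
proof (induction i)
  case 0 then show ?case using Q0Q by (auto simp: nba_path_def)
next
  case (Suc i)
  then show ?case using \<delta>Q[of "p i" "W i"] by (auto simp: nba_path_def word_def)
qed

lemma S_forest:
  assumes "\<forall>p\<in>S. nba_path \<delta> Q0 W p" "finite S"
  shows "FO W m (pre m ` S)"
  using assms unfolding forest_def nba_path_def by (auto simp: pre_pre)

lemma shape_S_pre: "shape F S m = shape F (pre m ` S) m"
  by (rule shape_agree) (simp add: pre_img_img)

lemma S_step:
  assumes "\<forall>p\<in>S. nba_path \<delta> Q0 W p" "finite S"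
  shows "pre (Suc m) ` S \<in> onestep W m (pre m ` S) (shape F S (Suc m))"
  using S_forest[OF assms] shape_S_pre[of S "Suc m"] pre_img_img[of m "Suc m" S]
  by (simp add: onestep_def)

lemma bpp_S:
  assumes W: "word Sig W" and P: "\<forall>p\<in>S. nba_path \<delta> Q0 W p" and f: "finite S"
  shows "bpp Q (shape F S i) = (\<exists>p\<in>S. \<not> bit F S p i)"
proof -
  have "bpp Q (shape F S i) = (\<exists>x\<in>pre i ` S. \<not> bit F (pre i ` S) x i)"
    using bpp_shape[OF W S_forest[OF P f, of i]] shape_S_pre[of S i] by simp
  also have "\<dots> = (\<exists>p\<in>S. \<not> bit F S p i)"
  proof -
    have "\<And>p. bit F (pre i ` S) (pre i p) i = bit F S p i"
      by (rule bit_agree) (auto simp: pre_img_img pre_pre)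
    then show ?thesis by auto
  qed
  finally show ?thesis .
qed

lemma bit_stay:
  assumes nb: "\<forall>i\<ge>n0. \<exists>p\<in>S. \<not> bit F S p i" and b: "bit F S p i" and i: "n0 \<le> i"
  shows "bit F S p (i + d)"
  using b i
proof (induction d)
  case 0 then show ?case by simp
next
  case (Suc d)
  then have "bit F S p (i + d)" by simp
  moreover have "\<exists>p\<in>S. \<not> bit F S p (i + d)" using nb Suc.prems by simp
  ultimately show ?case by simp
qed

lemma S_kpath:
  assumes W: "word Sig W" and S: "S \<subseteq> Fin W" "S \<noteq> {}"
  shows "kpath W (shape F S) \<and> kfinal (shape F S)"
proof -
  have fS: "finite S" using Fin_fin[OF W] S finite_subset by blast
  have cS: "card S \<le> k" using Fin_fin[OF W] S card_mono le_trans by blast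
  have P: "\<forall>p\<in>S. nba_path \<delta> Q0 W p" using S by (auto simp: nba_final_paths_def)
  have PQ: "\<And>p i. p \<in> S \<Longrightarrow> p i \<in> Q" using P path_Q[OF W] by blast
  have ks: "shape F S m \<in> kstates Q k" for m
  proof -
    have le: "shape F S m x \<le> k" for x
    proof -
      obtain q b where x: "x = (q,b)" by (cases x)
      have "shape F S m x \<le> card {p\<in>S. p m = q \<and> bit F S p m = b}"
        unfolding shape_def x using fS by (simp add: card_image_le)
      also have "\<dots> \<le> card S" using fS by (intro card_mono) auto
      finally show ?thesis using cS by simp
    qed
    have z: "shape F S m (q, b) = 0" if "q \<notin> Q" for q b
    proof -
      have e: "{p\<in>S. p m = q \<and> bit F S p m = b} = {}" using PQ that by blast
      show ?thesis unfolding shape_def prod.case e by simp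
    qed
    obtain p where p: "p \<in> S" using S by blast
    have "pre m p \<in> pre m ` {x\<in>S. x m = p m \<and> bit F S x m = bit F S p m}" using p by blast
    then have "shape F S m (p m, bit F S p m) \<noteq> 0" using fS by (auto simp: shape_def)
    then have "shape F S m \<noteq> (\<lambda>_. 0)" by (metis)
    then show ?thesis using le z by (simp add: kstates_def)
  qed
  have al: "kdis_alpha' Q Q0 (shape F S 0) \<noteq> 0"
  proof -
    have F0: "FO W 0 (pre 0 ` S)" using S_forest[OF P fS] .
    have s0: "shape F S 0 (q, b) = (if b then 0 else card {x\<in>pre 0 ` S. x 0 = q})" for q b
      using shape0[OF F0, of q b] shape_S_pre[of S 0] by simp
    have c1: "(\<forall>q b. (q \<notin> Q0 \<or> b = True) \<longrightarrow> shape F S 0 (q, b) = 0)"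
    proof (intro allI impI)
      fix q b assume "q \<notin> Q0 \<or> b = True"
      moreover have "q \<notin> Q0 \<Longrightarrow> card {x\<in>pre 0 ` S. x 0 = q} = 0" 
        using P by (intro card_Collect_empty) (auto simp: nba_path_def)
      ultimately show "shape F S 0 (q, b) = 0" using s0 by auto
    qed
    have c2: "\<forall>q\<in>Q0. shape F S 0 (q, False) \<le> 1"
    proof
      fix q assume "q \<in> Q0"
      have "{x\<in>pre 0 ` S. x 0 = q} \<subseteq> {pre 0 (\<lambda>_. q)}"
        by (auto simp: pre_eq_iff)
      then have "card {x\<in>pre 0 ` S. x 0 = q} \<le> 1" using card_mono[of "{pre 0 (\<lambda>_. q)}"] by fastforce
      then show "shape F S 0 (q, False) \<le> 1" using s0 by simp
    qed
    show ?thesis using c1 c2 by (simp add: kdis_alpha'_def)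
  qed
  have wn: "kdis_w Q \<delta> F k (shape F S i) (W i) (shape F S (Suc i)) \<noteq> 0" for i
  proof -
    have F: "FO W i (pre i ` S)" using S_forest[OF P fS] .
    have "card (onestep W i (pre i ` S) (shape F S (Suc i))) = kdis_w Q \<delta> F k (shape F S i) (W i) (shape F S (Suc i))"
      using core[OF W F, of "shape F S (Suc i)"] ks shape_S_pre[of S i, symmetric] by simp
    moreover have "onestep W i (pre i ` S) (shape F S (Suc i)) \<noteq> {}" using S_step[OF P fS] by blast
    ultimately show ?thesis using onestep_fin[OF W F] by (metis card_0_eq)
  qed
  have kp: "kpath W (shape F S)" using ks al wn by (simp add: kpath_def)
  have kf: "kfinal (shape F S)"
  proof (rule ccontr)
    assume "\<not> kfinal (shape F S)"
    then have "finite {i. shape F S i \<in> kdis_F' Q k}" by (simp add: kfinal_def)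
    then obtain n0 where n0: "\<forall>i\<ge>n0. shape F S i \<notin> kdis_F' Q k"
      by (metis (mono_tags, lifting) infinite_nat_iff_unbounded_le mem_Collect_eq)
    have nb: "\<forall>i\<ge>n0. \<exists>p\<in>S. \<not> bit F S p i"
    proof (intro allI impI)
      fix i assume "n0 \<le> i"
      then have "shape F S i \<notin> kdis_F' Q k" using n0 by simp
      then have "bpp Q (shape F S i)" using ks[of i] by (auto simp: kdis_F'_def bpp_def)
      then show "\<exists>p\<in>S. \<not> bit F S p i" using bpp_S[OF W P fS] by simp
    qed
    have "\<forall>p\<in>S. \<exists>j. n0 \<le> j \<and> p j \<in> F"
      using S by (auto simp: nba_final_paths_def infinite_nat_iff_unbounded_le)
    then obtain J where J: "\<forall>p\<in>S. n0 \<le> J p \<and> p (J p) \<in> F" by metis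
    define M where "M = Suc (Max (J ` S))"
    have allb: "bit F S p M" if p: "p \<in> S" for p
    proof -
      have b1: "bit F S p (Suc (J p))" using J p nb by simp
      have "J p \<le> Max (J ` S)" using fS p by simp
      then obtain d where Md: "M = Suc (J p) + d" by (metis M_def Suc_le_mono le_Suc_ex)
      have n: "n0 \<le> Suc (J p)" using J p le_SucI by blast
      have "bit F S p (Suc (J p) + d)" using bit_stay[OF nb b1 n] .
      then show ?thesis using Md by simp
    qed
    obtain p0 where p0: "p0 \<in> S" using S by blast
    have "n0 \<le> M" using J p0 fS M_def by (metis Max_ge finite_imageI image_eqI le_SucI order_trans)
    then obtain p where "p \<in> S" "\<not> bit F S p M" using nb by blast
    then show False using allb by blast
  qed
  show ?thesis using kp kf by simp
qed

end

context kda begin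

lemma bit_F:
  assumes "\<not> bit F S p n" "n \<le> m" "bit F S p m"
  shows "\<exists>j. n \<le> j \<and> j < m \<and> p j \<in> F"
  using assms
proof (induction m)
  case 0 then show ?case by simp
next
  case (Suc m)
  show ?case
  proof (cases "n = Suc m")
    case True then show ?thesis using Suc.prems(1) Suc.prems(3) by blast
  next
    case False
    then have nm: "n \<le> m" using Suc.prems by simp
    have "p m \<in> F \<or> bit F S p m" using Suc.prems(3) by simp
    then show ?thesis
    proof
      assume "p m \<in> F" then show ?thesis using nm by auto
    next
      assume "bit F S p m"
      then show ?thesis using Suc.IH[OF Suc.prems(1) nm] by (meson less_SucI)
    qed
  qed
qed

lemma Fpp_bit:
  assumes fin: "finite (pre m ` S)" and Fm: "shape F S m \<in> kdis_F' Q k" and p: "p \<in> S" and pq: "p m \<in> Q"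
  shows "bit F S p m"
proof (rule ccontr)
  assume nb: "\<not> bit F S p m"
  let ?X = "{x \<in> pre m ` S. x m = p m \<and> bit F S x m = False}"
  have mem: "pre m p \<in> ?X" using p nb by (simp add: bit_pre)
  have fX: "finite ?X" using fin by simp
  have "?X \<noteq> {}" using mem by blast
  then have "card ?X \<noteq> 0" using fX by simp
  then have "shape F S m (p m, False) \<noteq> 0" using shape_alt[of F S m "p m" False] by simp
  then show False using Fm pq by (simp add: kdis_F'_def)
qed

lemma konig:
  assumes W: "word Sig W" and kp: "kpath W \<rho>" and kf: "kfinal \<rho>"
    and T: "FO W N T" and sh: "\<forall>i\<le>N. shape F T i = \<rho> i"
  shows "\<exists>S\<in>Paths W \<rho>. pre N ` S = T"
proof -
  have ks: "\<And>i. \<rho> i \<in> kstates Q k" using kpath_ks[OF kp] .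
  define nxt where "nxt j T' = (SOME T''. T'' \<in> onestep W (N + j) T' (\<rho> (Suc (N + j))))" for j T'
  define tt where "tt = rec_nat T nxt"
  have tt0: "tt 0 = T" and ttS: "\<And>j. tt (Suc j) = nxt j (tt j)" by (simp_all add: tt_def)
  have inv: "FO W (N + j) (tt j) \<and> shape F (tt j) (N + j) = \<rho> (N + j)" for j
  proof (induction j)
    case 0 then show ?case using T sh tt0 by simp
  next
    case (Suc j)
    have c: "card (onestep W (N + j) (tt j) (\<rho> (Suc (N + j)))) = kdis_w Q \<delta> F k (\<rho> (N + j)) (W (N + j)) (\<rho> (Suc (N + j)))"
      using core[OF W conjunct1[OF Suc.IH]] Suc.IH ks by simp
    have "kdis_w Q \<delta> F k (\<rho> (N + j)) (W (N + j)) (\<rho> (Suc (N + j))) \<noteq> 0"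
      using kp by (simp add: kpath_def)
    then have "onestep W (N + j) (tt j) (\<rho> (Suc (N + j))) \<noteq> {}" using c by force
    then have "tt (Suc j) \<in> onestep W (N + j) (tt j) (\<rho> (Suc (N + j)))"
      unfolding ttS nxt_def by (simp add: some_in_eq)
    then show ?case by (simp add: onestep_def)
  qed
  have ttstep: "tt (Suc j) \<in> onestep W (N + j) (tt j) (\<rho> (Suc (N + j)))" for j
  proof -
    have c: "card (onestep W (N + j) (tt j) (\<rho> (Suc (N + j)))) = kdis_w Q \<delta> F k (\<rho> (N + j)) (W (N + j)) (\<rho> (Suc (N + j)))"
      using core[OF W conjunct1[OF inv]] inv ks by simp
    have "kdis_w Q \<delta> F k (\<rho> (N + j)) (W (N + j)) (\<rho> (Suc (N + j))) \<noteq> 0"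
      using kp by (simp add: kpath_def)
    then have "onestep W (N + j) (tt j) (\<rho> (Suc (N + j))) \<noteq> {}" using c by force
    then show ?thesis unfolding ttS nxt_def by (simp add: some_in_eq)
  qed
  have ttimg1: "pre (N + j) ` tt (Suc j) = tt j" for j using ttstep[of j] by (simp add: onestep_def)
  have ttimg: "pre (N + j) ` tt (j + d) = tt j" for j d
  proof (induction d)
    case 0 then show ?case using forest_img[OF conjunct1[OF inv[of j]]] by simp
  next
    case (Suc d)
    have "pre (N + j) ` tt (j + Suc d) = pre (N + j) ` (pre (N + (j + d)) ` tt (Suc (j + d)))"
      by (simp add: pre_img_img)
    also have "\<dots> = pre (N + j) ` tt (j + d)" using ttimg1[of "j + d"] by simp
    finally show ?case using Suc.IH by simp
  qed
  define S where "S = {p. \<forall>j. pre (N + j) p \<in> tt j}"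
  have Simg: "pre (N + j) ` S = tt j" for j
  proof
    show "pre (N + j) ` S \<subseteq> tt j" by (auto simp: S_def)
  next
    show "tt j \<subseteq> pre (N + j) ` S"
    proof
      fix x assume x: "x \<in> tt j"
      define nx where "nx i y = (SOME y'. y' \<in> tt (Suc (j + i)) \<and> pre (N + (j + i)) y' = y)" for i y
      define ch where "ch = rec_nat x nx"
      have ch0: "ch 0 = x" and chS: "\<And>i. ch (Suc i) = nx i (ch i)" by (simp_all add: ch_def)
      have chin: "ch i \<in> tt (j + i) \<and> (\<forall>i'\<le>i. pre (N + (j + i')) (ch i) = ch i')" for i
      proof (induction i)
        case 0 then show ?case using x ch0 forest_pre[OF conjunct1[OF inv[of j]]] by simp
      next
        case (Suc i)
        have ci: "ch i \<in> tt (j + i)" using Suc.IH by blast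
        have e: "pre (N + (j + i)) ` tt (Suc (j + i)) = tt (j + i)" by (rule ttimg1)
        have "ch i \<in> pre (N + (j + i)) ` tt (Suc (j + i))" unfolding e by (rule ci)
        then obtain y' where "y' \<in> tt (Suc (j + i))" "ch i = pre (N + (j + i)) y'" by (rule imageE)
        then have ex: "\<exists>y'. y' \<in> tt (Suc (j + i)) \<and> pre (N + (j + i)) y' = ch i" by metis
        have c1: "ch (Suc i) \<in> tt (Suc (j + i))" "pre (N + (j + i)) (ch (Suc i)) = ch i"
          using someI_ex[OF ex] unfolding chS nx_def by blast+
        have c2: "pre (N + (j + Suc i)) (ch (Suc i)) = ch (Suc i)"
          using forest_pre[OF conjunct1[OF inv[of "j + Suc i"]]] c1(1) by simp
        have "\<forall>i'\<le>Suc i. pre (N + (j + i')) (ch (Suc i)) = ch i'"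
        proof (intro allI impI)
          fix i' assume i': "i' \<le> Suc i"
          show "pre (N + (j + i')) (ch (Suc i)) = ch i'"
          proof (cases "i' = Suc i")
            case True then show ?thesis using c2 by simp
          next
            case False
            then have ii: "i' \<le> i" using i' by simp
            then have "pre (N + (j + i')) (ch (Suc i)) = pre (N + (j + i')) (pre (N + (j + i)) (ch (Suc i)))"
              by (simp add: pre_pre min_absorb1)
            also have "\<dots> = pre (N + (j + i')) (ch i)" using c1(2) by simp
            also have "\<dots> = ch i'" using Suc.IH ii by blast
            finally show ?thesis .
          qed
        qed
        then show ?case using c1(1) by simp
      qed
      define p where "p n = ch (n - (N + j)) n" for n
      have prep: "pre (N + (j + i)) p = ch i" for i
      proof (rule ext)
        fix n
        show "pre (N + (j + i)) p n = ch i n"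
        proof (cases "n \<le> N + (j + i)")
          case True
          let ?i' = "n - (N + j)"
          have ii: "?i' \<le> i" using True by simp
          have "ch ?i' n = pre (N + (j + ?i')) (ch i) n" using chin[of i] ii by simp
          also have "\<dots> = ch i n" by (rule pre_apply) simp
          finally show ?thesis using True by (simp add: p_def)
        next
          case False
          have "pre (N + (j + i)) (ch i) = ch i" using chin[of i] by blast
          then have "ch i n = undefined" using pre_undef[of "N + (j + i)" "ch i" n] False by simp
          then show ?thesis using False by (simp add: pre_def)
        qed
      qed
      have pS: "p \<in> S"
      proof -
        have "pre (N + j') p \<in> tt j'" for j'
        proof (cases "j \<le> j'")
          case True
          then obtain i where "j' = j + i" using le_Suc_ex by blast
          then show ?thesis using prep[of i] chin[of i] by simp
        next
          case False
          then obtain d where d: "j = j' + d" using le_Suc_ex[of j' j] by auto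
          have "pre (N + j') p = pre (N + j') (pre (N + j) p)" by (simp add: pre_pre min_absorb1 d)
          also have "\<dots> = pre (N + j') x" using prep[of 0] ch0 by simp
          finally have e: "pre (N + j') p = pre (N + j') x" .
          have "pre (N + j') x \<in> pre (N + j') ` tt (j' + d)" using x d by (intro imageI) simp
          then show ?thesis unfolding e ttimg .
        qed
        then show ?thesis by (simp add: S_def)
      qed
      have px: "x = pre (N + j) p" using prep[of 0] ch0 by simp
      show "x \<in> pre (N + j) ` S" by (rule image_eqI[where f="pre (N + j)", OF px pS])
    qed
  qed
  have SimgN: "pre N ` S = T" using Simg[of 0] tt0 by simp
  have finpre: "finite (pre m ` S)" for m
  proof -
    have "pre m ` S = pre m ` (pre (N + m) ` S)" by (simp add: pre_img_img)
    then show ?thesis using Simg[of m] forest_fin[OF conjunct1[OF inv[of m]]] by simp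
  qed
  have shS: "shape F S m = \<rho> m" for m
  proof (cases "m \<le> N")
    case True
    then show ?thesis using shape_pre_agree[OF SimgN True] sh by simp
  next
    case False
    then obtain j where j: "m = N + j" using le_Suc_ex[of N m] by auto
    have "shape F S m = shape F (pre m ` S) m" by (rule shape_S_pre)
    then show ?thesis using Simg[of j] inv[of j] j by simp
  qed
  have npath: "nba_path \<delta> Q0 W p" if p: "p \<in> S" for p
  proof -
    have "pre N p \<in> pre N ` S" using p by (rule imageI)
    then have "pre N p \<in> T" unfolding SimgN .
    then have "(pre N p) 0 \<in> Q0" using T by (auto simp: forest_def)
    then have "p 0 \<in> Q0" by simp
    moreover have "p (Suc i) \<in> \<delta> (p i) (W i)" for i
    proof -
      have "pre (N + Suc i) p \<in> tt (Suc i)" using p unfolding S_def by blast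
      then have "(pre (N + Suc i) p) (Suc i) \<in> \<delta> ((pre (N + Suc i) p) i) (W i)"
        using conjunct1[OF inv[of "Suc i"]] unfolding forest_def by auto
      then show ?thesis by simp
    qed
    ultimately show ?thesis by (simp add: nba_path_def)
  qed
  have final: "infinite {i. p i \<in> F}" if p: "p \<in> S" for p
  proof -
    have fi: "infinite {i. \<rho> i \<in> kdis_F' Q k}" using kf by (simp add: kfinal_def)
    have allbit: "bit F S p' m" if a1: "\<rho> m \<in> kdis_F' Q k" and a2: "p' \<in> S" for m p'
    proof (rule Fpp_bit[OF finpre])
      show "shape F S m \<in> kdis_F' Q k" using a1 shS by simp
      show "p' \<in> S" by (rule a2)
      show "p' m \<in> Q" by (rule path_Q[OF W npath[OF a2]])
    qed
    show ?thesis unfolding infinite_nat_iff_unbounded_le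
    proof
      fix B
      have fa: "\<forall>m. \<exists>n\<ge>m. n \<in> {i. \<rho> i \<in> kdis_F' Q k}"
        using fi unfolding infinite_nat_iff_unbounded_le .
      obtain m0 where m0: "m0 \<ge> B" "\<rho> m0 \<in> kdis_F' Q k" using fa by blast
      obtain m1 where m1: "m1 \<ge> Suc m0" "\<rho> m1 \<in> kdis_F' Q k" using fa by blast
      have "\<not> bit F S p (Suc m0)" using allbit[OF m0(2)] by simp
      moreover have "bit F S p m1" using allbit[OF m1(2) p] .
      ultimately obtain j where j: "Suc m0 \<le> j" "j < m1" "p j \<in> F" using bit_F m1(1) by blast
      then have "B \<le> j" using m0(1) by linarith
      then show "\<exists>j\<ge>B. j \<in> {i. p i \<in> F}" using j(3) by blast
    qed
  qed
  have Sne: "S \<noteq> {}"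
  proof
    assume "S = {}"
    then have "T = {}" using SimgN by simp
    then have "shape F T N = (\<lambda>_. 0)" by (auto simp: shape_def)
    then show False using sh ks[of N] by (auto simp: kstates_def)
  qed
  have "S \<subseteq> Fin W" unfolding nba_final_paths_def using npath final by blast
  then have SP: "S \<in> Paths W \<rho>" unfolding Paths_def mem_Collect_eq using Sne shS by simp
  show ?thesis by (rule bexI[where P="\<lambda>S. pre N ` S = T", OF SimgN SP])
qed

end

context kda begin

definition wprod where
  "wprod W \<rho> N = (\<Prod>n<N. kdis_w Q \<delta> F k (\<rho> n) (W n) (\<rho> (Suc n)))"

lemma Paths_fin: "word Sig W \<Longrightarrow> finite (Paths W \<rho>) \<and> card (Paths W \<rho>) \<le> 2 ^ k"
proof -
  assume W: "word Sig W"
  have sub: "Paths W \<rho> \<subseteq> Pow (Fin W)" by (auto simp: Paths_def)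
  have f: "finite (Fin W)" and c: "card (Fin W) \<le> k" using Fin_fin[OF W] by auto
  have "card (Paths W \<rho>) \<le> card (Pow (Fin W))" using sub f by (intro card_mono) auto
  also have "\<dots> = 2 ^ card (Fin W)" using f by (simp add: card_Pow)
  also have "\<dots> \<le> 2 ^ k" using c by (simp add: power_increasing)
  finally show ?thesis using sub f finite_subset by blast
qed

lemma fs0_props:
  assumes W: "word Sig W" and kp: "kpath W \<rho>" and T': "T' \<in> fs W \<rho> (T0 (\<rho> 0)) 0 N"
  shows "FO W N T' \<and> (\<forall>i\<le>N. shape F T' i = \<rho> i)"
proof -
  have al: "kdis_alpha' Q Q0 (\<rho> 0) \<noteq> 0" using kp by (simp add: kpath_def)
  have p: "FO W N T'" "pre 0 ` T' = T0 (\<rho> 0)" "\<forall>i. 0 < i \<longrightarrow> i \<le> N \<longrightarrow> shape F T' i = \<rho> i"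
    using fs_props[OF W T0_forest T'] by auto
  have "shape F T' 0 = \<rho> 0" using shape_pre_agree[OF p(2), of 0] T0_shape[OF al] by simp
  then show ?thesis using p by (metis gr0I)
qed

lemma fs0_card:
  assumes W: "word Sig W" and kp: "kpath W \<rho>"
  shows "finite (fs W \<rho> (T0 (\<rho> 0)) 0 N) \<and> card (fs W \<rho> (T0 (\<rho> 0)) 0 N) = wprod W \<rho> N"
proof -
  have al: "kdis_alpha' Q Q0 (\<rho> 0) \<noteq> 0" using kp by (simp add: kpath_def)
  show ?thesis using fs_card[where W=W and N=0 and T="T0 (\<rho> 0)" and \<rho>=\<rho> and j=N] W T0_forest[of W "\<rho> 0"] T0_shape[OF al] kpath_ks[OF kp]
    by (simp add: wprod_def)
qed

lemma prod_le:
  assumes W: "word Sig W" and kp: "kpath W \<rho>" and kf: "kfinal \<rho>"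
  shows "wprod W \<rho> N \<le> card (Paths W \<rho>)"
proof -
  let ?fs = "fs W \<rho> (T0 (\<rho> 0)) 0 N"
  have "?fs \<subseteq> (\<lambda>S. pre N ` S) ` Paths W \<rho>"
  proof
    fix T' assume T': "T' \<in> ?fs"
    have "FO W N T'" "\<forall>i\<le>N. shape F T' i = \<rho> i" using fs0_props[OF W kp T'] by auto
    then obtain S where "S \<in> Paths W \<rho>" "pre N ` S = T'" using konig[OF W kp kf] by blast
    then show "T' \<in> (\<lambda>S. pre N ` S) ` Paths W \<rho>" by blast
  qed
  then have "card ?fs \<le> card ((\<lambda>S. pre N ` S) ` Paths W \<rho>)"
    using Paths_fin[OF W] by (intro card_mono) auto
  also have "\<dots> \<le> card (Paths W \<rho>)" using Paths_fin[OF W] card_image_le by blast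
  finally show ?thesis using fs0_card[OF W kp] by simp
qed

lemma Paths_in_fs:
  assumes W: "word Sig W" and S: "S \<in> Paths W \<rho>"
  shows "pre (M + j) ` S \<in> fs W \<rho> (pre M ` S) M j"
proof (induction j)
  case 0 then show ?case by simp
next
  case (Suc j)
  have fS: "finite S" using S Fin_fin[OF W] finite_subset by (auto simp: Paths_def)
  have P: "\<forall>p\<in>S. nba_path \<delta> Q0 W p" using S by (auto simp: Paths_def nba_final_paths_def)
  have "shape F S (Suc (M + j)) = \<rho> (Suc (M + j))" using S by (simp add: Paths_def)
  then have "pre (Suc (M + j)) ` S \<in> onestep W (M + j) (pre (M + j) ` S) (\<rho> (Suc (M + j)))"
    using S_step[OF P fS, of "M + j"] by simp
  then show ?case using Suc.IH by auto
qed

lemma Paths_pre0: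
  assumes W: "word Sig W" and kp: "kpath W \<rho>" and S: "S \<in> Paths W \<rho>"
  shows "pre 0 ` S = T0 (\<rho> 0)"
proof -
  have fS: "finite S" using S Fin_fin[OF W] finite_subset by (auto simp: Paths_def)
  have P: "\<forall>p\<in>S. nba_path \<delta> Q0 W p" using S by (auto simp: Paths_def nba_final_paths_def)
  have al: "kdis_alpha' Q Q0 (\<rho> 0) \<noteq> 0" using kp by (simp add: kpath_def)
  have "shape F (pre 0 ` S) 0 = \<rho> 0" using S shape_S_pre[of S 0] by (simp add: Paths_def)
  then show ?thesis using T0_unique[OF al S_forest[OF P fS]] by simp
qed

lemma eq_from_pre:
  assumes f: "finite S'" and all: "\<forall>j. pre (N + j) p \<in> pre (N + j) ` S'"
  shows "p \<in> S'"
proof (rule ccontr)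
  assume np: "p \<notin> S'"
  have "\<forall>p'\<in>S'. \<exists>d. p d \<noteq> p' d" using np by (metis ext)
  then obtain d where d: "\<forall>p'\<in>S'. p (d p') \<noteq> p' (d p')" by metis
  define D where "D = Max (d ` S')"
  obtain p' where p': "p' \<in> S'" "pre (N + D) p = pre (N + D) p'" using all[rule_format, of D] by blast
  then have "d p' \<le> D" using f D_def by simp
  then have "p (d p') = p' (d p')" using p'(2) by (simp add: pre_eq_iff)
  then show False using d p'(1) by blast
qed

lemma wprod_split: "wprod W \<rho> (N + j) = wprod W \<rho> N * (\<Prod>n<j. kdis_w Q \<delta> F k (\<rho> (N + n)) (W (N + n)) (\<rho> (Suc (N + n))))"
  unfolding wprod_def by (induction j) (auto simp: mult.assoc)

lemma wprod_pos: "kpath W \<rho> \<Longrightarrow> wprod W \<rho> N \<noteq> 0"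
  unfolding wprod_def kpath_def by simp

lemma wprod_mono: "kpath W \<rho> \<Longrightarrow> N \<le> M \<Longrightarrow> wprod W \<rho> N \<le> wprod W \<rho> M"
proof -
  assume kp: "kpath W \<rho>" and NM: "N \<le> M"
  then obtain j where j: "M = N + j" using le_Suc_ex by blast
  let ?P = "(\<Prod>n<j. kdis_w Q \<delta> F k (\<rho> (N + n)) (W (N + n)) (\<rho> (Suc (N + n))))"
  have "?P \<noteq> 0" using kp by (simp add: kpath_def)
  then have h: "1 \<le> ?P" by (metis less_one not_le)
  have "wprod W \<rho> N * 1 \<le> wprod W \<rho> N * ?P" using h by (rule mult_le_mono2)
  then show ?thesis using j wprod_split[of W \<rho> N j] by simp
qed

lemma exact:
  assumes W: "word Sig W" and kp: "kpath W \<rho>" and kf: "kfinal \<rho>"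
  shows "\<exists>N0. \<forall>N\<ge>N0. wprod W \<rho> N = card (Paths W \<rho>)"
proof -
  have bnd: "wprod W \<rho> N \<le> 2 ^ k" for N
    using le_trans[OF prod_le[OF W kp kf, of N] conjunct2[OF Paths_fin[OF W, of \<rho>]]] .
  have "range (wprod W \<rho>) \<subseteq> {0..2^k}" using bnd by auto
  then have fr: "finite (range (wprod W \<rho>))" using finite_subset by blast
  define Mx where "Mx = Max (range (wprod W \<rho>))"
  have "Mx \<in> range (wprod W \<rho>)" unfolding Mx_def using fr by (intro Max_in) auto
  then obtain N0 where N0: "wprod W \<rho> N0 = Mx" by auto
  have const: "wprod W \<rho> N = wprod W \<rho> N0" if "N \<ge> N0" for N
  proof -
    have "wprod W \<rho> N \<le> Mx" unfolding Mx_def using fr by simp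
    moreover have "wprod W \<rho> N0 \<le> wprod W \<rho> N" using wprod_mono[OF kp that] .
    ultimately show ?thesis using N0 by simp
  qed
  have one: "(\<Prod>n<j. kdis_w Q \<delta> F k (\<rho> (N0 + n)) (W (N0 + n)) (\<rho> (Suc (N0 + n)))) = 1" for j
  proof -
    let ?P = "(\<Prod>n<j. kdis_w Q \<delta> F k (\<rho> (N0 + n)) (W (N0 + n)) (\<rho> (Suc (N0 + n))))"
    have "wprod W \<rho> N0 * ?P = wprod W \<rho> N0 * 1"
      using const[of "N0 + j"] wprod_split[of W \<rho> N0 j] by simp
    then show ?thesis using wprod_pos[OF kp, of N0] mult_left_cancel by blast
  qed
  let ?fs = "fs W \<rho> (T0 (\<rho> 0)) 0 N0"
  have inj: "inj_on (\<lambda>S. pre N0 ` S) (Paths W \<rho>)"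
  proof (rule inj_onI)
    fix S S' assume S: "S \<in> Paths W \<rho>" and S': "S' \<in> Paths W \<rho>" and e: "pre N0 ` S = pre N0 ` S'"
    have SF: "S \<subseteq> Fin W" "S' \<subseteq> Fin W" using S S' unfolding Paths_def by blast+
    have fS: "finite S" "finite S'" using SF Fin_fin[OF W] finite_subset by blast+
    have PS: "\<forall>p\<in>S. nba_path \<delta> Q0 W p" using SF(1) unfolding nba_final_paths_def by blast
    have T: "FO W N0 (pre N0 ` S)" by (rule S_forest[OF PS fS(1)])
    have "shape F S N0 = \<rho> N0" using S unfolding Paths_def by blast
    then have sT: "shape F (pre N0 ` S) N0 = \<rho> N0" using shape_S_pre[of S N0] by simp
    have lev: "pre (N0 + j) ` S = pre (N0 + j) ` S'" for j
    proof -
      have a: "pre (N0 + j) ` S \<in> fs W \<rho> (pre N0 ` S) N0 j" by (rule Paths_in_fs[OF W S])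
      have b: "pre (N0 + j) ` S' \<in> fs W \<rho> (pre N0 ` S) N0 j" using Paths_in_fs[OF W S', of N0 j] e by simp
      have "card (fs W \<rho> (pre N0 ` S) N0 j) = 1"
        using fs_card[where W=W and N=N0 and T="pre N0 ` S" and \<rho>=\<rho> and j=j] W T sT kpath_ks[OF kp] one[of j] by simp
      then obtain X where X: "fs W \<rho> (pre N0 ` S) N0 j = {X}" by (rule card_1_singletonE)
      have "pre (N0 + j) ` S = X" using a unfolding X by simp
      moreover have "pre (N0 + j) ` S' = X" using b unfolding X by simp
      ultimately show ?thesis by simp
    qed
    show "S = S'"
    proof
      show "S \<subseteq> S'"
      proof
        fix p assume "p \<in> S"
        then have "\<forall>j. pre (N0 + j) p \<in> pre (N0 + j) ` S'" using lev by (metis imageI)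
        then show "p \<in> S'" by (rule eq_from_pre[OF fS(2)])
      qed
    next
      show "S' \<subseteq> S"
      proof
        fix p assume "p \<in> S'"
        then have "\<forall>j. pre (N0 + j) p \<in> pre (N0 + j) ` S" using lev by (metis imageI)
        then show "p \<in> S" by (rule eq_from_pre[OF fS(1)])
      qed
    qed
  qed
  have sub: "(\<lambda>S. pre N0 ` S) ` Paths W \<rho> \<subseteq> ?fs"
  proof
    fix T assume "T \<in> (\<lambda>S. pre N0 ` S) ` Paths W \<rho>"
    then obtain S where S: "S \<in> Paths W \<rho>" "T = pre N0 ` S" by blast
    show "T \<in> ?fs" using Paths_in_fs[OF W S(1), of 0 N0] Paths_pre0[OF W kp S(1)] S(2) by simp
  qed
  have "card (Paths W \<rho>) \<le> card ?fs"
    using card_inj_on_le[OF inj sub] fs0_card[OF W kp] by blast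
  then have "card (Paths W \<rho>) \<le> wprod W \<rho> N0" using fs0_card[OF W kp] by simp
  then have "card (Paths W \<rho>) = wprod W \<rho> N0" using prod_le[OF W kp kf, of N0] by simp
  then show ?thesis using const by metis
qed

end

lemma alt_sum_Pow:
  assumes "finite X"
  shows "(\<Sum>S\<in>Pow X. (-1::real) ^ card S) = (if X = {} then 1 else 0)"
  using assms
proof (induction X rule: finite_induct)
  case empty then show ?case by simp
next
  case (insert x X)
  have P: "Pow (insert x X) = Pow X \<union> insert x ` Pow X" by (rule Pow_insert)
  have d: "Pow X \<inter> insert x ` Pow X = {}" using insert.hyps by auto
  have inj: "inj_on (insert x) (Pow X)" using insert.hyps by (auto simp: inj_on_def) 
  have c: "card (insert x S) = Suc (card S)" if "S \<in> Pow X" for S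
    using that insert.hyps finite_subset by (metis PowD card_insert_disjoint subsetD)
  have "(\<Sum>S\<in>Pow (insert x X). (-1::real) ^ card S) =
      (\<Sum>S\<in>Pow X. (-1::real) ^ card S) + (\<Sum>S\<in>insert x ` Pow X. (-1::real) ^ card S)"
    unfolding P using insert.hyps d by (intro sum.union_disjoint) auto
  also have "(\<Sum>S\<in>insert x ` Pow X. (-1::real) ^ card S) = (\<Sum>S\<in>Pow X. (-1::real) ^ card (insert x S))"
    using sum.reindex[OF inj] by simp
  also have "\<dots> = (\<Sum>S\<in>Pow X. - ((-1::real) ^ card S))" using c by (intro sum.cong) auto
  finally show ?case by (simp add: sum_negf)
qed

lemma alt_sum:
  assumes "finite X"
  shows "(\<Sum>S\<in>Pow X - {{}}. (-1::real) ^ (card S - 1)) = (if X = {} then 0 else 1)"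
proof -
  have e: "(-1::real) ^ (card S - 1) = - ((-1) ^ card S)" if "S \<in> Pow X - {{}}" for S
  proof -
    have "finite S" using that assms finite_subset by auto
    then have "card S \<noteq> 0" using that by auto
    then obtain n where "card S = Suc n" using not0_implies_Suc by blast
    then show ?thesis by simp
  qed
  have "(\<Sum>S\<in>Pow X - {{}}. (-1::real) ^ (card S - 1)) = - (\<Sum>S\<in>Pow X - {{}}. (-1::real) ^ card S)"
    using e by (simp add: sum_negf)
  also have "(\<Sum>S\<in>Pow X - {{}}. (-1::real) ^ card S) = (\<Sum>S\<in>Pow X. (-1::real) ^ card S) - 1"
    using assms by (simp add: sum_diff1)
  finally show ?thesis using alt_sum_Pow[OF assms] by simp
qed

lemma sign_lemma:
  assumes "1 \<le> s" "1 \<le> c"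
  shows "(-1::real) ^ (s - 1) * ((-1) powi (int c - int s)) = (-1) ^ (c - 1)"
proof -
  have a: "(-1::real) ^ (s - 1) = (-1) powi (int s - 1)" using assms by (simp add: power_int_def nat_diff_distrib')
  have b: "(-1::real) ^ (c - 1) = (-1) powi (int c - 1)" using assms by (simp add: power_int_def nat_diff_distrib')
  have "(-1::real) ^ (s - 1) * ((-1) powi (int c - int s)) = (-1) powi (int s - 1) * (-1) powi (int c - int s)"
    using a by simp
  also have "\<dots> = (-1) powi (int s - 1 + (int c - int s))"
    using power_int_add[of "-1::real" "int s - 1" "int c - int s"] by simp
  also have "int s - 1 + (int c - int s) = int c - 1" by simp
  finally show ?thesis using b by simp
qed

lemma inj_eventually: "finite S \<Longrightarrow> \<exists>m0. \<forall>m\<ge>m0. inj_on (pre m) S"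
proof (induction S rule: finite_induct)
  case empty then show ?case by simp
next
  case (insert x S)
  obtain m0 where m0: "\<forall>m\<ge>m0. inj_on (pre m) S" using insert.IH by blast
  have "\<forall>y\<in>S. \<exists>d. x d \<noteq> y d" using insert.hyps by (metis ext)
  then obtain d where d: "\<forall>y\<in>S. x (d y) \<noteq> y (d y)" by metis
  define m1 where "m1 = max m0 (Max (d ` S))"
  have "inj_on (pre m) (insert x S)" if m: "m \<ge> m1" for m
  proof -
    have "inj_on (pre m) S" using m0 m m1_def by simp
    moreover have "pre m x \<notin> pre m ` S"
    proof
      assume "pre m x \<in> pre m ` S"
      then obtain y where y: "y \<in> S" "pre m x = pre m y" by blast
      have "d y \<le> m" using y(1) insert.hyps m m1_def by (meson Max_ge finite_imageI image_eqI le_trans max.cobounded2)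
      then have "x (d y) = y (d y)" using y(2) by (simp add: pre_eq_iff)
      then show False using d y(1) by blast
    qed
    ultimately show ?thesis using insert.hyps by simp
  qed
  then show ?case by blast
qed

context kda begin

lemma rsize_shape:
  assumes fS: "finite S" and PQ: "\<forall>p\<in>S. p m \<in> Q"
  shows "rsize Q (shape F S m) = card (pre m ` S)"
proof -
  let ?A = "pre m ` S"
  let ?g = "\<lambda>x. (x m, bit F S x m)"
  have fA: "finite ?A" using fS by simp
  have gA: "?g ` ?A \<subseteq> Q \<times> (UNIV::bool set)" using PQ by auto
  have "rsize Q (shape F S m) = (\<Sum>y\<in>Q \<times> (UNIV::bool set). card {x\<in>?A. ?g x = y})"
    unfolding rsize_def
  proof (intro sum.cong refl)
    fix y :: "_ \<times> bool" assume "y \<in> Q \<times> UNIV"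
    obtain q b where y: "y = (q, b)" by (cases y)
    show "shape F S m y = card {x\<in>?A. ?g x = y}" using shape_alt[of F S m q b] y by simp
  qed
  also have "\<dots> = (\<Sum>y\<in>Q \<times> (UNIV::bool set). \<Sum>x\<in>{x\<in>?A. ?g x = y}. (1::nat))"
    by (intro sum.cong refl) (rule card_eq_sum)
  also have "\<dots> = (\<Sum>x\<in>?A. (1::nat))" by (rule sum.group[OF fA _ gA]) (use finQ in simp)
  also have "\<dots> = card ?A" by (rule card_eq_sum[symmetric])
  finally show ?thesis .
qed

end

context kda begin

abbreviation "SS \<equiv> kdis_S Q Sig \<delta> Q0 F k"
abbreviation "MM \<equiv> kdis_M Q Sig \<delta> Q0 F k"
abbreviation "AA \<equiv> kdis_alpha Q Sig \<delta> Q0 F k"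
abbreviation "FF \<equiv> kdis_F Q Sig \<delta> Q0 F k"
abbreviation "EE \<equiv> kdis_edges Q Sig \<delta> F k"

lemma M'_nz: "kdis_M' Q \<delta> F k a r r' \<noteq> 0 \<longleftrightarrow> kdis_w Q \<delta> F k r a r' \<noteq> 0"
  by (simp add: kdis_M'_def power_int_def)

lemma edge_E:
  assumes W: "word Sig W" and kp: "kpath W \<rho>"
  shows "(\<rho> j, \<rho> (Suc j)) \<in> EE"
proof -
  have a: "\<rho> j \<in> kstates Q k" "\<rho> (Suc j) \<in> kstates Q k" using kpath_ks[OF kp] by blast+
  have b: "W j \<in> Sig" using W by (simp add: word_def)
  have "kdis_w Q \<delta> F k (\<rho> j) (W j) (\<rho> (Suc j)) \<noteq> 0" using kp unfolding kpath_def by blast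
  then have "kdis_M' Q \<delta> F k (W j) (\<rho> j) (\<rho> (Suc j)) \<noteq> 0" using M'_nz by blast
  then show ?thesis unfolding kdis_edges_def using a b by blast
qed

lemma chain_E:
  assumes W: "word Sig W" and kp: "kpath W \<rho>"
  shows "(\<rho> a, \<rho> (a + d)) \<in> EE\<^sup>*"
proof (induction d)
  case 0 then show ?case by simp
next
  case (Suc d)
  have "(\<rho> (a + d), \<rho> (Suc (a + d))) \<in> EE" by (rule edge_E[OF W kp])
  then show ?case using Suc.IH by simp
qed

lemma chain_E1:
  assumes W: "word Sig W" and kp: "kpath W \<rho>"
  shows "(\<rho> a, \<rho> (a + Suc d)) \<in> EE\<^sup>+"
proof -
  have "(\<rho> a, \<rho> (a + d)) \<in> EE\<^sup>*" by (rule chain_E[OF W kp])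
  moreover have "(\<rho> (a + d), \<rho> (Suc (a + d))) \<in> EE" by (rule edge_E[OF W kp])
  ultimately show ?thesis by simp
qed

lemma kpath_in_S:
  assumes W: "word Sig W" and kp: "kpath W \<rho>" and kf: "kfinal \<rho>"
  shows "\<rho> i \<in> SS"
proof -
  have r0: "\<rho> 0 \<in> kstates Q k" "kdis_alpha' Q Q0 (\<rho> 0) \<noteq> 0" using kp by (auto simp: kpath_def)
  have reach: "(\<rho> 0, \<rho> i) \<in> EE\<^sup>*" using chain_E[OF W kp, of 0 i] by simp
  let ?A = "{j. i \<le> j \<and> \<rho> j \<in> kdis_F' Q k}"
  have inf: "infinite ?A"
  proof -
    have "infinite {j. \<rho> j \<in> kdis_F' Q k}" using kf by (simp add: kfinal_def)
    then have "\<forall>m. \<exists>n\<ge>m. \<rho> n \<in> kdis_F' Q k" unfolding infinite_nat_iff_unbounded_le by simp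
    then have "\<forall>m. \<exists>n\<ge>m. n \<in> ?A"
    proof (intro allI)
      fix m assume h: "\<forall>m. \<exists>n\<ge>m. \<rho> n \<in> kdis_F' Q k"
      obtain n where "n \<ge> max m i" "\<rho> n \<in> kdis_F' Q k" using h by blast
      then show "\<exists>n\<ge>m. n \<in> ?A" by auto
    qed
    then show ?thesis unfolding infinite_nat_iff_unbounded_le .
  qed
  have "\<rho> ` ?A \<subseteq> kstates Q k" using kpath_ks[OF kp] by auto
  then have "finite (\<rho> ` ?A)" using finite_kstates[OF finQ] finite_subset by blast
  then obtain j1 where j1: "j1 \<in> ?A" "infinite {j\<in>?A. \<rho> j = \<rho> j1}" using pigeonhole_infinite[OF inf] by blast
  have "\<forall>m. \<exists>n\<ge>m. n \<in> {j\<in>?A. \<rho> j = \<rho> j1}"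
    using j1(2) unfolding infinite_nat_iff_unbounded_le .
  then have "\<exists>n\<ge>Suc j1. n \<in> {j\<in>?A. \<rho> j = \<rho> j1}" by (rule spec)
  then obtain j2 where j2': "j2 \<ge> Suc j1" "j2 \<in> {j\<in>?A. \<rho> j = \<rho> j1}" by auto
  from j2'(2) have j2e: "\<rho> j2 = \<rho> j1" by blast
  obtain d where d: "j2 = Suc j1 + d" using j2'(1) le_Suc_ex[of "Suc j1" j2] by blast
  have "(\<rho> j1, \<rho> (j1 + Suc d)) \<in> EE\<^sup>+" by (rule chain_E1[OF W kp])
  moreover have "\<rho> (j1 + Suc d) = \<rho> j1" using d j2e by simp
  ultimately have c1: "(\<rho> j1, \<rho> j1) \<in> EE\<^sup>+" by simp
  have "i \<le> j1" using j1(1) by simp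
  then obtain d1 where d1: "j1 = i + d1" using le_Suc_ex by blast
  have "(\<rho> i, \<rho> (i + d1)) \<in> EE\<^sup>*" by (rule chain_E[OF W kp])
  then have c2: "(\<rho> i, \<rho> j1) \<in> EE\<^sup>*" using d1 by simp
  have c3: "\<rho> j1 \<in> kdis_F' Q k" using j1(1) by simp
  have e1: "\<exists>r0\<in>kstates Q k. kdis_alpha' Q Q0 r0 \<noteq> 0 \<and> (r0, \<rho> i) \<in> EE\<^sup>*"
    using r0 reach by blast
  have e2: "\<exists>s\<in>kdis_F' Q k. (\<rho> i, s) \<in> EE\<^sup>* \<and> (s, s) \<in> EE\<^sup>+"
    using c1 c2 c3 by blast
  show ?thesis unfolding kdis_S_def using e1 e2 kpath_ks[OF kp, of i] by blast
qed

lemma SS_ks: "r \<in> SS \<Longrightarrow> r \<in> kstates Q k"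
  unfolding kdis_S_def by blast

lemma AA_eq: "r \<in> SS \<Longrightarrow> AA r = kdis_alpha' Q Q0 r"
  by (simp add: kdis_alpha_def)

lemma MM_eq: "r \<in> SS \<Longrightarrow> r' \<in> SS \<Longrightarrow> MM a r r' = kdis_M' Q \<delta> F k a r r'"
  by (simp add: kdis_M_def)

lemma wba_paths_eq:
  assumes W: "word Sig W"
  shows "wba_final_paths SS MM AA FF W = {\<rho>. kpath W \<rho> \<and> kfinal \<rho>}"
proof
  show "wba_final_paths SS MM AA FF W \<subseteq> {\<rho>. kpath W \<rho> \<and> kfinal \<rho>}"
  proof
    fix \<rho> assume "\<rho> \<in> wba_final_paths SS MM AA FF W"
    then have p: "\<forall>i. \<rho> i \<in> SS" "AA (\<rho> 0) \<noteq> 0" "\<forall>i. MM (W i) (\<rho> i) (\<rho> (Suc i)) \<noteq> 0"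
      "infinite {i. \<rho> i \<in> FF}"
      unfolding wba_final_paths_def wba_path_def by blast+
    have ks: "\<rho> i \<in> kstates Q k" for i using p(1) SS_ks by blast
    have "kdis_alpha' Q Q0 (\<rho> 0) \<noteq> 0" using p(1,2) AA_eq by metis
    moreover have "kdis_w Q \<delta> F k (\<rho> i) (W i) (\<rho> (Suc i)) \<noteq> 0" for i
      using p(1,3) MM_eq M'_nz by metis
    ultimately have "kpath W \<rho>" using ks by (simp add: kpath_def)
    moreover have "{i. \<rho> i \<in> FF} \<subseteq> {i. \<rho> i \<in> kdis_F' Q k}" by (auto simp: kdis_F_def)
    then have "kfinal \<rho>" using p(4) finite_subset unfolding kfinal_def by blast
    ultimately show "\<rho> \<in> {\<rho>. kpath W \<rho> \<and> kfinal \<rho>}" by simp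
  qed
next
  show "{\<rho>. kpath W \<rho> \<and> kfinal \<rho>} \<subseteq> wba_final_paths SS MM AA FF W"
  proof
    fix \<rho> assume "\<rho> \<in> {\<rho>. kpath W \<rho> \<and> kfinal \<rho>}"
    then have kp: "kpath W \<rho>" and kf: "kfinal \<rho>" by auto
    have S: "\<And>i. \<rho> i \<in> SS" using kpath_in_S[OF W kp kf] .
    have "AA (\<rho> 0) \<noteq> 0" using S[of 0] AA_eq kp by (simp add: kpath_def)
    moreover have "MM (W i) (\<rho> i) (\<rho> (Suc i)) \<noteq> 0" for i
      using MM_eq[OF S S] M'_nz kp by (simp add: kpath_def)
    moreover have "{i. \<rho> i \<in> FF} = {i. \<rho> i \<in> kdis_F' Q k}" using S by (auto simp: kdis_F_def)
    then have "infinite {i. \<rho> i \<in> FF}" using kf by (simp add: kfinal_def)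
    ultimately show "\<rho> \<in> wba_final_paths SS MM AA FF W"
      unfolding wba_final_paths_def wba_path_def using S by blast
  qed
qed

lemma prodM:
  assumes W: "word Sig W" and kp: "kpath W \<rho>" and kf: "kfinal \<rho>"
  shows "(\<Prod>n\<le>i. MM (W n) (\<rho> n) (\<rho> (Suc n))) =
    (-1) powi (int (rsize Q (\<rho> (Suc i))) - int (rsize Q (\<rho> 0))) * real (wprod W \<rho> (Suc i))"
proof (induction i)
  case 0
  show ?case using MM_eq[OF kpath_in_S[OF W kp kf] kpath_in_S[OF W kp kf]]
    by (simp add: kdis_M'_def wprod_def)
next
  case (Suc i)
  let ?a = "int (rsize Q (\<rho> (Suc i)))" and ?b = "int (rsize Q (\<rho> (Suc (Suc i))))" and ?s = "int (rsize Q (\<rho> 0))"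
  let ?w = "kdis_w Q \<delta> F k (\<rho> (Suc i)) (W (Suc i)) (\<rho> (Suc (Suc i)))"
  have m: "MM (W (Suc i)) (\<rho> (Suc i)) (\<rho> (Suc (Suc i))) = (-1) powi (?b - ?a) * real ?w"
    using MM_eq[OF kpath_in_S[OF W kp kf] kpath_in_S[OF W kp kf]] by (simp add: kdis_M'_def)
  have wp: "wprod W \<rho> (Suc (Suc i)) = wprod W \<rho> (Suc i) * ?w" by (simp add: wprod_def)
  have pw: "(-1::real) powi (?a - ?s) * (-1) powi (?b - ?a) = (-1) powi (?b - ?s)"
    using power_int_add[of "-1::real" "?a - ?s" "?b - ?a"] by simp
  have "(\<Prod>n\<le>Suc i. MM (W n) (\<rho> n) (\<rho> (Suc n))) =
      (\<Prod>n\<le>i. MM (W n) (\<rho> n) (\<rho> (Suc n))) * MM (W (Suc i)) (\<rho> (Suc i)) (\<rho> (Suc (Suc i)))"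
    by (rule prod.atMost_Suc)
  also have "\<dots> = ((-1) powi (?a - ?s) * (-1) powi (?b - ?a)) * (real (wprod W \<rho> (Suc i)) * real ?w)"
    unfolding Suc.IH m by (simp add: algebra_simps)
  also have "\<dots> = (-1) powi (?b - ?s) * real (wprod W \<rho> (Suc (Suc i)))"
    unfolding pw wp by simp
  finally show ?case .
qed

lemma weight:
  assumes W: "word Sig W" and kp: "kpath W \<rho>" and kf: "kfinal \<rho>"
  shows "path_weight MM AA W \<rho> = (\<Sum>S\<in>Paths W \<rho>. (-1::real) ^ (card S - 1))"
proof -
  obtain N0 where N0: "\<forall>N\<ge>N0. wprod W \<rho> N = card (Paths W \<rho>)" using exact[OF W kp kf] by blast
  have "card (Paths W \<rho>) \<noteq> 0" using N0 wprod_pos[OF kp, of N0] by simp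
  then obtain S0 where S0: "S0 \<in> Paths W \<rho>" by (metis card.empty ex_in_conv)
  have Sprops: "finite S \<and> (\<forall>p\<in>S. \<forall>m. p m \<in> Q) \<and> (\<forall>m. shape F S m = \<rho> m) \<and> S \<noteq> {}"
    if S: "S \<in> Paths W \<rho>" for S
  proof -
    have SF: "S \<subseteq> Fin W" using S unfolding Paths_def by blast
    then have "finite S" using Fin_fin[OF W] finite_subset by blast
    moreover have "\<forall>p\<in>S. \<forall>m. p m \<in> Q" using SF path_Q[OF W] unfolding nba_final_paths_def by blast
    moreover have "(\<forall>m. shape F S m = \<rho> m) \<and> S \<noteq> {}" using S unfolding Paths_def by blast
    ultimately show ?thesis by blast
  qed
  have sz: "rsize Q (\<rho> m) = card (pre m ` S)" if S: "S \<in> Paths W \<rho>" for S m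
    using rsize_shape[of S m] Sprops[OF S] by simp
  obtain m0 where m0: "\<forall>m\<ge>m0. inj_on (pre m) S0" using inj_eventually Sprops[OF S0] by blast
  have cards: "card S = card S0" if S: "S \<in> Paths W \<rho>" for S
  proof -
    obtain mS where mS: "\<forall>m\<ge>mS. inj_on (pre m) S" using inj_eventually Sprops[OF S] by blast
    let ?m = "max m0 mS"
    have "card S = card (pre ?m ` S)" using mS by (simp add: card_image)
    also have "\<dots> = rsize Q (\<rho> ?m)" using sz[OF S] by simp
    also have "\<dots> = card (pre ?m ` S0)" using sz[OF S0] by simp
    also have "\<dots> = card S0" using m0 by (simp add: card_image)
    finally show ?thesis .
  qed
  define c where "c = card S0"
  define s0 where "s0 = rsize Q (\<rho> 0)"
  have c1: "1 \<le> c" using Sprops[OF S0] by (simp add: c_def card_gt_0_iff Suc_le_eq)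
  have s01: "1 \<le> s0"
  proof -
    have "pre 0 ` S0 \<noteq> {}" "finite (pre 0 ` S0)" using Sprops[OF S0] by auto
    then show ?thesis using sz[OF S0, of 0] by (simp add: s0_def card_gt_0_iff Suc_le_eq)
  qed
  let ?L = "(-1::real) powi (int c - int s0) * real (card (Paths W \<rho>))"
  have ev: "(\<Prod>n\<le>i. MM (W n) (\<rho> n) (\<rho> (Suc n))) = ?L" if i: "i \<ge> max N0 m0" for i
  proof -
    have "rsize Q (\<rho> (Suc i)) = card (pre (Suc i) ` S0)" by (rule sz[OF S0])
    also have "\<dots> = c" using m0 i by (simp add: card_image c_def)
    finally have "rsize Q (\<rho> (Suc i)) = c" .
    moreover have "wprod W \<rho> (Suc i) = card (Paths W \<rho>)" using N0 i by simp
    ultimately show ?thesis using prodM[OF W kp kf, of i] by (simp add: s0_def)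
  qed
  have "eventually (\<lambda>i. (\<Prod>n\<le>i. MM (W n) (\<rho> n) (\<rho> (Suc n))) = ?L) sequentially"
    unfolding eventually_sequentially using ev by blast
  then have "(\<lambda>i. \<Prod>n\<le>i. MM (W n) (\<rho> n) (\<rho> (Suc n))) \<longlonglongrightarrow> ?L"
    by (rule tendsto_eventually)
  then have lim: "lim (\<lambda>i. \<Prod>n\<le>i. MM (W n) (\<rho> n) (\<rho> (Suc n))) = ?L" by (rule limI)
  have al: "AA (\<rho> 0) = (-1) ^ (s0 - 1)"
  proof -
    have ne: "kdis_alpha' Q Q0 (\<rho> 0) \<noteq> 0" using kp by (simp add: kpath_def)
    have if_nz: "\<And>P (a::real). (if P then a else 0) \<noteq> 0 \<Longrightarrow> (if P then a else 0) = a" by auto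
    have "kdis_alpha' Q Q0 (\<rho> 0) = (-1) ^ (s0 - 1)"
      using if_nz[OF ne[unfolded kdis_alpha'_def]] unfolding kdis_alpha'_def s0_def .
    then show ?thesis using AA_eq[OF kpath_in_S[OF W kp kf]] by simp
  qed
  have "path_weight MM AA W \<rho> = (-1) ^ (s0 - 1) * ?L" unfolding path_weight_def lim al ..
  also have "\<dots> = (-1) ^ (c - 1) * real (card (Paths W \<rho>))"
    using sign_lemma[OF s01 c1] by (simp add: mult.assoc[symmetric])
  also have "\<dots> = (\<Sum>S\<in>Paths W \<rho>. (-1::real) ^ (card S - 1))"
    using cards by (simp add: c_def)
  finally show ?thesis .
qed

end

context kda begin

lemma Paths_wprod0: "word Sig W \<Longrightarrow> kpath W \<rho> \<Longrightarrow> kfinal \<rho> \<Longrightarrow> Paths W \<rho> \<noteq> {}"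
  using prod_le[of W \<rho> 0] by (auto simp: wprod_def)

lemma final_main:
  assumes W: "word Sig W"
  shows "finite (wba_final_paths SS MM AA FF W) \<and> card (wba_final_paths SS MM AA FF W) \<le> 2 ^ k \<and>
    wba_L SS MM AA FF W = (if Fin W = {} then 0 else 1)"
proof -
  let ?A = "Pow (Fin W) - {{}}"
  let ?g = "\<lambda>S. shape F S"
  have fF: "finite (Fin W)" and cF: "card (Fin W) \<le> k" using Fin_fin[OF W] by auto
  have fA: "finite ?A" using fF by simp
  have FP: "wba_final_paths SS MM AA FF W = ?g ` ?A"
  proof
    show "wba_final_paths SS MM AA FF W \<subseteq> ?g ` ?A"
    proof
      fix \<rho> assume "\<rho> \<in> wba_final_paths SS MM AA FF W"
      then have kp: "kpath W \<rho>" and kf: "kfinal \<rho>" using wba_paths_eq[OF W] by auto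
      obtain S where S: "S \<in> Paths W \<rho>" using Paths_wprod0[OF W kp kf] by blast
      then have "S \<in> ?A" and "?g S = \<rho>" unfolding Paths_def by auto
      then show "\<rho> \<in> ?g ` ?A" by (metis image_eqI)
    qed
  next
    show "?g ` ?A \<subseteq> wba_final_paths SS MM AA FF W"
      using S_kpath[OF W] wba_paths_eq[OF W] by auto
  qed
  have "card (wba_final_paths SS MM AA FF W) \<le> card ?A" unfolding FP using fA by (rule card_image_le)
  also have "\<dots> \<le> card (Pow (Fin W))" using fF by (intro card_mono) auto
  also have "\<dots> = 2 ^ card (Fin W)" using fF by (simp add: card_Pow)
  also have "\<dots> \<le> 2 ^ k" using cF by (simp add: power_increasing)
  finally have c: "card (wba_final_paths SS MM AA FF W) \<le> 2 ^ k" .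
  have PA: "Paths W \<rho> = {S \<in> ?A. ?g S = \<rho>}" for \<rho> unfolding Paths_def by (auto simp: fun_eq_iff)
  have "wba_L SS MM AA FF W = (\<Sum>\<rho>\<in>?g ` ?A. path_weight MM AA W \<rho>)"
    unfolding wba_L_def FP ..
  also have "\<dots> = (\<Sum>\<rho>\<in>?g ` ?A. \<Sum>S\<in>{S \<in> ?A. ?g S = \<rho>}. (-1::real) ^ (card S - 1))"
  proof (rule sum.cong[OF refl])
    fix \<rho> assume "\<rho> \<in> ?g ` ?A"
    then have "\<rho> \<in> wba_final_paths SS MM AA FF W" using FP by simp
    then have kp: "kpath W \<rho>" and kf: "kfinal \<rho>" using wba_paths_eq[OF W] by auto
    show "path_weight MM AA W \<rho> = (\<Sum>S\<in>{S \<in> ?A. ?g S = \<rho>}. (-1::real) ^ (card S - 1))"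
      using weight[OF W kp kf] PA by simp
  qed
  also have "\<dots> = (\<Sum>S\<in>?A. (-1::real) ^ (card S - 1))"
    by (rule sum.group[OF fA]) (use fA in auto)
  also have "\<dots> = (if Fin W = {} then 0 else 1)" by (rule alt_sum[OF fF])
  finally show ?thesis using c FP fA by simp
qed

end

context kda begin

definition ve where "ve e \<longleftrightarrow> fst e \<in> kstates Q k \<and> fst (snd e) \<in> Sig \<and> snd (snd e) \<in> kstates Q k \<and>
   kdis_w Q \<delta> F k (fst e) (fst (snd e)) (snd (snd e)) \<noteq> 0"

primrec fpath where
  "fpath r [] r' \<longleftrightarrow> r = r'"
| "fpath r (e # es) r' \<longleftrightarrow> fst e = r \<and> ve e \<and> fpath (snd (snd e)) es r'"

definition wp where "wp es = (\<Prod>e\<leftarrow>es. kdis_w Q \<delta> F k (fst e) (fst (snd e)) (snd (snd e)))"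

lemma fpath_append: "fpath r xs r' \<Longrightarrow> fpath r' ys r'' \<Longrightarrow> fpath r (xs @ ys) r''"
  by (induction xs arbitrary: r) auto

lemma fpath_rep: "fpath r xs r \<Longrightarrow> fpath r (concat (replicate n xs)) r"
  by (induction n) (auto intro: fpath_append)

lemma wp_append: "wp (xs @ ys) = wp xs * wp ys"
  by (simp add: wp_def)

lemma wp_rep: "wp (concat (replicate n xs)) = wp xs ^ n"
  by (induction n) (auto simp: wp_append wp_def)

lemma wp_pos: "fpath r xs r' \<Longrightarrow> 1 \<le> wp xs"
proof (induction xs arbitrary: r)
  case Nil then show ?case by (simp add: wp_def)
next
  case (Cons e es)
  then have "1 \<le> wp es" "kdis_w Q \<delta> F k (fst e) (fst (snd e)) (snd (snd e)) \<noteq> 0" by (auto simp: ve_def)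
  then show ?case by (simp add: wp_def)
qed

lemma fpath_nth:
  "fpath r xs r' \<Longrightarrow> i < length xs \<Longrightarrow> ve (xs ! i) \<and> (i = 0 \<longrightarrow> fst (xs ! i) = r) \<and>
     (Suc i < length xs \<longrightarrow> snd (snd (xs ! i)) = fst (xs ! Suc i)) \<and>
     (Suc i = length xs \<longrightarrow> snd (snd (xs ! i)) = r')"
proof (induction xs arbitrary: r i)
  case Nil then show ?case by simp
next
  case (Cons e es)
  show ?case
  proof (cases i)
    case 0
    then show ?thesis using Cons.prems by (cases es) auto
  next
    case (Suc j)
    then have j: "j < length es" using Cons.prems by simp
    have fp: "fpath (snd (snd e)) es r'" using Cons.prems(1) by simp
    have ih: "ve (es ! j) \<and> (Suc j < length es \<longrightarrow> snd (snd (es ! j)) = fst (es ! Suc j)) \<and>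
     (Suc j = length es \<longrightarrow> snd (snd (es ! j)) = r')" using Cons.IH[OF fp j] by blast
    show ?thesis unfolding Suc nth_Cons_Suc length_Cons Suc_less_eq nat.inject using ih by simp
  qed
qed

lemma edge_ve: "(r, r') \<in> EE \<Longrightarrow> \<exists>a. ve (r, a, r')"
  unfolding kdis_edges_def ve_def using M'_nz by auto

lemma rtrancl_fpath: "(r, r') \<in> EE\<^sup>* \<Longrightarrow> \<exists>xs. fpath r xs r'"
proof (induction rule: rtrancl_induct)
  case base then show ?case by (metis fpath.simps(1))
next
  case (step y z)
  then obtain xs a where "fpath r xs y" "ve (y, a, z)" using edge_ve by blast
  then have "fpath r (xs @ [(y, a, z)]) z" by (intro fpath_append) auto
  then show ?case by blast
qed

lemma trancl_fpath: "(r, r') \<in> EE\<^sup>+ \<Longrightarrow> \<exists>xs. xs \<noteq> [] \<and> fpath r xs r'"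
proof -
  assume "(r, r') \<in> EE\<^sup>+"
  then obtain y where "(r, y) \<in> EE\<^sup>*" "(y, r') \<in> EE" by (meson tranclD2)
  then obtain xs a where "fpath r xs y" "ve (y, a, r')" using rtrancl_fpath edge_ve by blast
  then have "fpath r (xs @ [(y, a, r')]) r'" by (intro fpath_append) auto
  then show ?thesis by blast
qed

lemma prod_list_nth: "(\<Prod>x\<leftarrow>xs. f x) = (\<Prod>n<length xs. f (xs ! n))"
proof (induction xs)
  case Nil then show ?case by simp
next
  case (Cons e es)
  have "(\<Prod>n<length (e # es). f ((e # es) ! n)) = f e * (\<Prod>n<length es. f (es ! n))"
    unfolding length_Cons prod.lessThan_Suc_shift nth_Cons_0 nth_Cons_Suc ..
  then show ?case using Cons.IH by simp
qed

lemma wp_nth: "wp xs = (\<Prod>n<length xs. kdis_w Q \<delta> F k (fst (xs ! n)) (fst (snd (xs ! n))) (snd (snd (xs ! n))))"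
  unfolding wp_def by (rule prod_list_nth)

lemma lasso:
  assumes r0: "r0 \<in> kstates Q k" "kdis_alpha' Q Q0 r0 \<noteq> 0"
    and P: "fpath r0 P s" and Z: "fpath s Z s" "Z \<noteq> []" and s: "s \<in> kdis_F' Q k"
  defines "E \<equiv> \<lambda>i. if i < length P then P ! i else Z ! ((i - length P) mod length Z)"
  shows "word Sig (\<lambda>i. fst (snd (E i))) \<and> kpath (\<lambda>i. fst (snd (E i))) (\<lambda>i. fst (E i)) \<and>
    kfinal (\<lambda>i. fst (E i)) \<and> wprod (\<lambda>i. fst (snd (E i))) (\<lambda>i. fst (E i)) (length P) = wp P \<and>
    (\<forall>i. snd (snd (E i)) = fst (E (Suc i)))"
proof -
  have zl: "0 < length Z" using Z(2) by simp
  have veE: "ve (E i)" for i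
  proof (cases "i < length P")
    case True then show ?thesis using fpath_nth[OF P True] by (simp add: E_def)
  next
    case False
    have "(i - length P) mod length Z < length Z" using zl by simp
    then show ?thesis using fpath_nth[OF Z(1)] False by (simp add: E_def)
  qed
  have chain: "snd (snd (E i)) = fst (E (Suc i))" for i
  proof (cases "Suc i < length P")
    case True
    then show ?thesis using fpath_nth[OF P, of i] by (simp add: E_def)
  next
    case False
    note F1 = False
    show ?thesis
    proof (cases "Suc i = length P")
      case True
      have a: "snd (snd (P ! i)) = s" using fpath_nth[OF P, of i] True by simp
      have b: "fst (Z ! 0) = s" using fpath_nth[OF Z(1), of 0] zl by simp
      show ?thesis using a b True by (simp add: E_def)
    next
      case False
      then have ge: "length P \<le> i" using F1 by simp
      define j where "j = (i - length P) mod length Z"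
      have jl: "j < length Z" using zl by (simp add: j_def)
      have Ei: "E i = Z ! j" using ge by (simp add: E_def j_def)
      have m: "(Suc i - length P) mod length Z = (if Suc j = length Z then 0 else Suc j)"
        using ge mod_Suc[of "i - length P" "length Z"] by (simp add: j_def Suc_diff_le)
      have ES: "E (Suc i) = Z ! ((Suc i - length P) mod length Z)" using ge by (simp add: E_def)
      show ?thesis
      proof (cases "Suc j = length Z")
        case True
        have "snd (snd (Z ! j)) = s" using fpath_nth[OF Z(1) jl] True by simp
        moreover have "fst (Z ! 0) = s" using fpath_nth[OF Z(1), of 0] zl by simp
        ultimately show ?thesis using Ei ES m True by simp
      next
        case False
        then have "Suc j < length Z" using jl by simp
        then show ?thesis using fpath_nth[OF Z(1) jl] Ei ES m False by simp
      qed
    qed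
  qed
  have E0: "fst (E 0) = r0"
  proof (cases "P = []")
    case True
    then have "r0 = s" using P by simp
    then show ?thesis using True fpath_nth[OF Z(1), of 0] zl by (simp add: E_def)
  next
    case False
    then show ?thesis using fpath_nth[OF P, of 0] by (simp add: E_def)
  qed
  let ?W = "\<lambda>i. fst (snd (E i))" and ?\<rho> = "\<lambda>i. fst (E i)"
  have w: "word Sig ?W" using veE by (simp add: word_def ve_def)
  have kp: "kpath ?W ?\<rho>"
    unfolding kpath_def
  proof (intro conjI allI)
    show "?\<rho> 0 \<in> kstates Q k" "kdis_alpha' Q Q0 (?\<rho> 0) \<noteq> 0" using E0 r0 by simp_all
  next
    fix i
    show "?\<rho> (Suc i) \<in> kstates Q k" using veE[of i] chain[of i] by (simp add: ve_def)
    show "kdis_w Q \<delta> F k (?\<rho> i) (?W i) (?\<rho> (Suc i)) \<noteq> 0" using veE[of i] chain[of i] by (simp add: ve_def)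
  qed
  have kf: "kfinal ?\<rho>"
  proof -
    have "?\<rho> (length P + t * length Z) = s" for t
      using fpath_nth[OF Z(1), of 0] zl by (simp add: E_def)
    then have "\<forall>m. \<exists>n\<ge>m. n \<in> {i. ?\<rho> i \<in> kdis_F' Q k}"
    proof (intro allI)
      fix m assume h: "\<And>t. ?\<rho> (length P + t * length Z) = s"
      have "m * 1 \<le> m * length Z" using zl by (intro mult_le_mono2) linarith
      then have "m \<le> m * length Z" by simp
      then have "m \<le> length P + m * length Z" by linarith
      moreover have "length P + m * length Z \<in> {i. ?\<rho> i \<in> kdis_F' Q k}" using h[of m] s by simp
      ultimately show "\<exists>n\<ge>m. n \<in> {i. ?\<rho> i \<in> kdis_F' Q k}" by blast
    qed
    then show ?thesis unfolding kfinal_def infinite_nat_iff_unbounded_le .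
  qed
  have wpr: "wprod ?W ?\<rho> (length P) = wp P"
    unfolding wprod_def wp_nth
  proof (rule prod.cong[OF refl])
    fix n assume "n \<in> {..<length P}"
    then show "kdis_w Q \<delta> F k (?\<rho> n) (?W n) (?\<rho> (Suc n)) =
      kdis_w Q \<delta> F k (fst (P ! n)) (fst (snd (P ! n))) (snd (snd (P ! n)))"
      using chain[of n, symmetric] by (simp add: E_def)
  qed
  show ?thesis using w kp kf wpr chain by simp
qed

end

context kda begin

lemma Mword_path: "u \<in> lists Sig \<Longrightarrow> Mword SS MM u x y \<noteq> 0 \<Longrightarrow> (x, y) \<in> EE\<^sup>*"
proof (induction u arbitrary: x)
  case Nil
  then have "x = y" by (auto split: if_splits)
  then show ?case by simp
next
  case (Cons a u)
  have "(\<Sum>p\<in>SS. MM a x p * Mword SS MM u p y) \<noteq> 0" using Cons.prems by simp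
  then obtain p where p: "p \<in> SS" "MM a x p * Mword SS MM u p y \<noteq> 0"
    by (meson sum.neutral)
  then have m: "MM a x p \<noteq> 0" and mw: "Mword SS MM u p y \<noteq> 0" by auto
  have xS: "x \<in> SS" using m by (auto simp: kdis_M_def split: if_splits)
  have "kdis_M' Q \<delta> F k a x p \<noteq> 0" using m MM_eq[OF xS p(1)] by simp
  moreover have "a \<in> Sig" using Cons.prems by simp
  ultimately have "(x, p) \<in> EE" using SS_ks[OF xS] SS_ks[OF p(1)] unfolding kdis_edges_def by blast
  moreover have "(p, y) \<in> EE\<^sup>*" using Cons.IH[OF _ mw] Cons.prems by simp
  ultimately show ?case by simp
qed

lemma size_mono:
  assumes W: "word Sig W" and kp: "kpath W \<rho>" and kf: "kfinal \<rho>" and mm: "m \<le> m'"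
  shows "rsize Q (\<rho> m) \<le> rsize Q (\<rho> m')"
proof -
  obtain S where S: "S \<in> Paths W \<rho>" using Paths_wprod0[OF W kp kf] by blast
  have SF: "S \<subseteq> Fin W" using S unfolding Paths_def by blast
  then have fS: "finite S" using Fin_fin[OF W] finite_subset by blast
  have PQ: "\<forall>p\<in>S. \<forall>m. p m \<in> Q" using SF path_Q[OF W] unfolding nba_final_paths_def by blast
  have sh: "\<forall>m. shape F S m = \<rho> m" using S unfolding Paths_def by blast
  have sz: "rsize Q (\<rho> m) = card (pre m ` S)" for m using rsize_shape[OF fS] PQ sh by metis
  have "card (pre m ` S) = card (pre m ` (pre m' ` S))" using mm by (simp add: pre_img_img)
  also have "\<dots> \<le> card (pre m' ` S)" using fS by (intro card_image_le) simp
  finally show ?thesis using sz by simp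
qed

lemma ult_stable: "ultimately_stable SS Sig MM"
  unfolding ultimately_stable_def
proof (intro ballI impI)
  fix q q' a assume qS: "q \<in> SS" and q'S: "q' \<in> SS" and aS: "a \<in> Sig"
    and ex: "\<exists>u\<in>lists Sig. Mword SS MM u q' q \<noteq> 0"
  show "MM a q q' \<in> {0, 1}"
  proof (cases "MM a q q' = 0")
    case True then show ?thesis by simp
  next
    case False
    let ?w = "kdis_w Q \<delta> F k q a q'"
    have MMe: "MM a q q' = (-1) powi (int (rsize Q q') - int (rsize Q q)) * real ?w"
      using MM_eq[OF qS q'S] by (simp add: kdis_M'_def)
    have wnz: "?w \<noteq> 0" using False MMe by auto
    obtain u where "u \<in> lists Sig" "Mword SS MM u q' q \<noteq> 0" using ex by blast
    then have "(q', q) \<in> EE\<^sup>*" by (rule Mword_path)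
    then obtain Lr where Lr: "fpath q' Lr q" using rtrancl_fpath by blast
    define L where "L = (q, a, q') # Lr"
    have veL: "ve (q, a, q')" using SS_ks[OF qS] SS_ks[OF q'S] aS wnz by (simp add: ve_def)
    have L: "fpath q L q" using Lr veL by (simp add: L_def)
    obtain r0 where r0: "r0 \<in> kstates Q k" "kdis_alpha' Q Q0 r0 \<noteq> 0" "(r0, q) \<in> EE\<^sup>*"
      using qS unfolding kdis_S_def by blast
    obtain s where s: "s \<in> kdis_F' Q k" "(q, s) \<in> EE\<^sup>*" "(s, s) \<in> EE\<^sup>+"
      using qS unfolding kdis_S_def by blast
    obtain X where X: "fpath r0 X q" using rtrancl_fpath[OF r0(3)] by blast
    obtain Y where Y: "fpath q Y s" using rtrancl_fpath[OF s(2)] by blast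
    obtain Z where Z: "Z \<noteq> []" "fpath s Z s" using trancl_fpath[OF s(3)] by blast
    define R where "R = concat (replicate k L) @ Y"
    define P where "P = X @ L @ R"
    have PR: "P = X @ concat (replicate (Suc k) L) @ Y" by (simp add: P_def R_def)
    have fP: "fpath r0 P s" unfolding PR
      by (intro fpath_append[OF X] fpath_append[OF fpath_rep[OF L] Y])
    define E where "E \<equiv> \<lambda>i. if i < length P then P ! i else Z ! ((i - length P) mod length Z)"
    let ?W = "\<lambda>i. fst (snd (E i))" and ?\<rho> = "\<lambda>i. fst (E i)"
    have las: "word Sig ?W \<and> kpath ?W ?\<rho> \<and> kfinal ?\<rho> \<and> wprod ?W ?\<rho> (length P) = wp P \<and>
        (\<forall>i. snd (snd (E i)) = fst (E (Suc i)))"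
      unfolding E_def by (rule lasso[OF r0(1,2) fP Z(2) Z(1) s(1)])
    then have W: "word Sig ?W" and kp: "kpath ?W ?\<rho>" and kf: "kfinal ?\<rho>"
      and wpP: "wprod ?W ?\<rho> (length P) = wp P" and ch: "\<And>i. snd (snd (E i)) = fst (E (Suc i))" by auto
    have "wp P \<le> 2 ^ k"
      using prod_le[OF W kp kf, of "length P"] Paths_fin[OF W, of ?\<rho>] wpP by linarith
    moreover have "?w ^ Suc k \<le> wp P"
    proof -
      have "?w \<le> wp L" using wp_pos[OF Lr] by (simp add: L_def wp_def)
      then have "?w ^ Suc k \<le> wp L ^ Suc k" by (rule power_mono) simp
      also have "\<dots> = wp (concat (replicate (Suc k) L))" by (rule wp_rep[symmetric])
      also have "\<dots> \<le> wp X * wp (concat (replicate (Suc k) L)) * wp Y"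
        using wp_pos[OF X] wp_pos[OF Y] by (simp add: mult_le_mono)
      also have "\<dots> = wp P" unfolding PR by (simp add: wp_append mult.assoc)
      finally show ?thesis .
    qed
    ultimately have wle: "?w ^ Suc k \<le> 2 ^ k" by linarith
    have w1: "?w = 1"
    proof (rule ccontr)
      assume "?w \<noteq> 1"
      then have "2 \<le> ?w" using wnz by linarith
      then have h: "2 ^ Suc k \<le> ?w ^ Suc k" by (rule power_mono) simp
      have "(2::nat) ^ k < 2 ^ Suc k" by simp
      then show False using h wle by linarith
    qed
    have Lne: "L \<noteq> []" by (simp add: L_def)
    let ?x = "length X"
    have Pnth: "P ! (?x + i) = L ! i" if "i < length L" for i
      using that by (simp add: P_def nth_append)
    have lenP: "?x + length L \<le> length P" by (simp add: P_def)
    have Eq: "E (?x + i) = L ! i" if "i < length L" for i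
      using that lenP Pnth by (simp add: E_def)
    have r1: "?\<rho> ?x = q" using Eq[of 0] Lne by (simp add: L_def)
    have r2: "?\<rho> (Suc ?x) = q'" using Eq[of 0] ch[of ?x] Lne by (simp add: L_def)
    have r3: "?\<rho> (?x + length L) = q"
    proof -
      obtain j where j: "length L = Suc j" using Lne by (cases L) auto
      have a: "snd (snd (L ! j)) = q" using fpath_nth[OF L, of j] j by simp
      have b: "E (?x + j) = L ! j" using Eq[of j] j by simp
      have "?\<rho> (?x + length L) = fst (E (Suc (?x + j)))" using j by simp
      also have "\<dots> = snd (snd (E (?x + j)))" using ch[of "?x + j"] by simp
      finally show ?thesis using a b by simp
    qed
    have "rsize Q q \<le> rsize Q q'" using size_mono[OF W kp kf, of ?x "Suc ?x"] r1 r2 by simp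
    moreover have "rsize Q q' \<le> rsize Q q"
    proof -
      have "Suc ?x \<le> ?x + length L" using Lne by (cases L) auto
      then show ?thesis using size_mono[OF W kp kf, of "Suc ?x" "?x + length L"] r2 r3 by simp
    qed
    ultimately have "rsize Q q = rsize Q q'" by simp
    then show ?thesis using MMe w1 by simp
  qed
qed

end

theorem theorem4:
  fixes Q :: "'q set" and Sig :: "'a set" and \<delta> :: "'q \<Rightarrow> 'a \<Rightarrow> 'q set"
    and Q0 F :: "'q set" and k :: nat
  assumes "nba Q Sig \<delta> Q0 F" and "k \<ge> 1" and "k_ambiguous Q Sig \<delta> Q0 F k"
  shows "IBA (kdis_S Q Sig \<delta> Q0 F k) Sig (kdis_M Q Sig \<delta> Q0 F k) (kdis_alpha Q Sig \<delta> Q0 F k)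
             (kdis_F Q Sig \<delta> Q0 F k) \<and>
         (\<forall>w. word Sig w \<longrightarrow>
           (wba_L (kdis_S Q Sig \<delta> Q0 F k) (kdis_M Q Sig \<delta> Q0 F k) (kdis_alpha Q Sig \<delta> Q0 F k)
                  (kdis_F Q Sig \<delta> Q0 F k) w = 1
            \<longleftrightarrow> nba_final_paths \<delta> Q0 F w \<noteq> {}))"
proof -
  interpret kda Q Sig \<delta> Q0 F k
    using assms(1,3) by (simp add: kda_def kd_def kda_axioms_def)
  have fS: "finite (kdis_S Q Sig \<delta> Q0 F k)"
  proof -
    have "kdis_S Q Sig \<delta> Q0 F k \<subseteq> kstates Q k" unfolding kdis_S_def by blast
    then show ?thesis using finite_kstates[OF finQ] finite_subset by blast
  qed
  have bnd: "\<exists>N::nat. \<forall>w. word Sig w \<longrightarrow>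
      finite (wba_final_paths (kdis_S Q Sig \<delta> Q0 F k) (kdis_M Q Sig \<delta> Q0 F k) (kdis_alpha Q Sig \<delta> Q0 F k) (kdis_F Q Sig \<delta> Q0 F k) w) \<and>
      card (wba_final_paths (kdis_S Q Sig \<delta> Q0 F k) (kdis_M Q Sig \<delta> Q0 F k) (kdis_alpha Q Sig \<delta> Q0 F k) (kdis_F Q Sig \<delta> Q0 F k) w) \<le> N"
    using final_main by blast
  have L01: "\<forall>w. word Sig w \<longrightarrow>
      wba_L (kdis_S Q Sig \<delta> Q0 F k) (kdis_M Q Sig \<delta> Q0 F k) (kdis_alpha Q Sig \<delta> Q0 F k) (kdis_F Q Sig \<delta> Q0 F k) w \<in> {0, 1}"
    using final_main by simp
  have "IBA (kdis_S Q Sig \<delta> Q0 F k) Sig (kdis_M Q Sig \<delta> Q0 F k) (kdis_alpha Q Sig \<delta> Q0 F k)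
             (kdis_F Q Sig \<delta> Q0 F k)"
    unfolding IBA_def using fS ult_stable bnd L01 by blast
  moreover have "\<forall>w. word Sig w \<longrightarrow>
           (wba_L (kdis_S Q Sig \<delta> Q0 F k) (kdis_M Q Sig \<delta> Q0 F k) (kdis_alpha Q Sig \<delta> Q0 F k)
                  (kdis_F Q Sig \<delta> Q0 F k) w = 1
            \<longleftrightarrow> nba_final_paths \<delta> Q0 F w \<noteq> {})"
    using final_main by simp
  ultimately show ?thesis by blast
qed

end
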